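(* Let $P$ be a positive integer, $N=2^L$ with $L$ a positive integer, $D_1,\ldots,D_{N^P},R$ positive integers, let $\mathcal{W}^P_{\mathrm{TN}}\in\mathbb{R}^{D_1\times\cdots\times D_{N^P}}$ be generated by the $P$-dimensional locally connected tensor network of width $R$, and let $\mu:[N]^P\to[N^P]$ be compatible. For any $\mathcal{A}\in\mathbb{R}^{D_1\times\cdots\times D_{N^P}}$ and $\epsilon\in[0,\|\mathcal{A}\|/4]$, if $\|\mathcal{W}^P_{\mathrm{TN}}-\mathcal{A}\|\le\epsilon$, then for all canonical partitions $(\mathcal{K},\mathcal{K}^c)\in\mathcal{C}^P_N$: $$\mathrm{QE}(\mathcal{A};\mu(\mathcal{K}))\le\ln(R)+\frac{2\epsilon}{\|\mathcal{A}\|}\ln(D_{\mu(\mathcal{K})})+2\sqrt{\frac{2\epsilon}{\|\mathcal{A}\|}}.$$ In contrast, there exists $\mathcal{A}'\in\mathbb{R}^{D_1\times\cdots\times D_{N^P}}$ such that for all $(\mathcal{K},\mathcal{K}^c)\in\mathcal{C}^P_N$: $\mathrm{QE}(\mathcal{A}';\mu(\mathcal{K}))\ge\min\{|\mathcal{K}|,|\mathcal{K}^c|\}\cdot\ln(\min_{n\in[N^P]}D_n)$.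
   Context: Norms are Frobenius. For a tensor $\mathcal{A}\in\mathbb{R}^{D_1\times\cdots\times D_{N^P}}$ and $\mathcal{J}\subseteq[N^P]$, $[\![\mathcal{A};\mathcal{J}]\!]$ is its matrix arrangement with rows indexed by axes $\mathcal{J}$ and columns by the remaining axes $\mathcal{J}^c$; $D_{\mathcal{J}}:=\min\{\prod_{n\in\mathcal{J}}D_n,\prod_{n\in\mathcal{J}^c}D_n\}$; $\mathrm{QE}(\mathcal{A};\mathcal{J}):=-\sum_d\rho_d\ln\rho_d$ with $\rho_d=\sigma_d^2/\sum_{d'}\sigma_{d'}^2$ over the singular values of $[\![\mathcal{A};\mathcal{J}]\!]$ ($\mathrm{QE}(0;\mathcal{J})=0$; $\epsilon/\|\mathcal{A}\|:=0$ if $\mathcal{A}=0$). The $P$-dimensional locally connected tensor network of width $R$ has as graph a perfect $2^P$-ary tree of height $L$ with $N^P$ leaves, open edge of leaf $n$ (left to right) of dimension $D_n$, inner edges of dimension $R$; it generates exactly the tensors: choose $\phi^{(0,n)}_r\in\mathbb{R}^{D_n}$ ($n\in[N^P]$, $r\in[R]$); for $l=1,\ldots,L-1$, $n\in[2^{P(L-l)}]$, $r\in[R]$ set $\phi^{(l,n)}_r=\sum_{i_1,\ldots,i_{2^P}\in[R]}a^{(l,n)}_{r,i_1,\ldots,i_{2^P}}\bigotimes_{k=1}^{2^P}\phi^{(l-1,2^P(n-1)+k)}_{i_k}$; and $\mathcal{W}^P_{\mathrm{TN}}=\sum_{i_1,\ldots,i_{2^P}}a_{i_1,\ldots,i_{2^P}}\bigotimes_{k=1}^{2^P}\phi^{(L-1,k)}_{i_k}$.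 Thus the axes descending from the $n$-th node at level $l$ form the contiguous index block $\{2^{Pl}(n-1)+1,\ldots,2^{Pl}n\}$. A bijection $\mu:[N]^P\to[N^P]$ is compatible if for every node, the set $\mu^{-1}$ of the axis indices descending from it is a contiguous cubic block of $[N]^P$ of the form $\times_{p=1}^P\{s(k_p-1)+1,\ldots,sk_p\}$; for $\mathcal{K}\subseteq[N]^P$, $\mu(\mathcal{K}):=\{\mu(\mathbf{n}):\mathbf{n}\in\mathcal{K}\}$. The canonical partitions $\mathcal{C}^P_N$ of $[N]^P$ are the pairs $(\mathcal{K},[N]^P\setminus\mathcal{K})$ with $\mathcal{K}=\times_{p=1}^P\{2^{L-l}(n_p-1)+1,\ldots,2^{L-l}n_p\}$ for $l\in\{0,\ldots,L\}$, $n_1,\ldots,n_P\in[2^l]$. *)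

theory Defs
  imports Complex_Main "HOL-Library.FuncSet"
begin

text \<open>Tensor axes are numbered 1..M (M = N^P). An entry index of a tensor
is a function i :: nat => nat with i n < D n for axes n, and i n = 0 off the axes.
A tensor is a function from such index functions to reals (only its values on
the index set matter).\<close>

definition tidx :: "(nat \<Rightarrow> nat) \<Rightarrow> nat set \<Rightarrow> (nat \<Rightarrow> nat) set" where
  "tidx D S = {i. (\<forall>n\<in>S. i n < D n) \<and> (\<forall>n. n \<notin> S \<longrightarrow> i n = 0)}"

definition fnorm :: "(nat \<Rightarrow> nat) \<Rightarrow> nat \<Rightarrow> ((nat \<Rightarrow> nat) \<Rightarrow> real) \<Rightarrow> real" where
  "fnorm D M A = sqrt (\<Sum>i\<in>tidx D {1..M}. (A i)\<^sup>2)"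

text \<open>Matrix arrangement [[A; J]]: rows indexed by tidx D J, columns by tidx D ({1..M} - J).\<close>
definition matricize :: "((nat \<Rightarrow> nat) \<Rightarrow> real) \<Rightarrow> nat set \<Rightarrow> (nat \<Rightarrow> nat) \<Rightarrow> (nat \<Rightarrow> nat) \<Rightarrow> real" where
  "matricize A J r c = A (\<lambda>n. if n \<in> J then r n else c n)"

definition is_svd :: "'r set \<Rightarrow> 'c set \<Rightarrow> ('r \<Rightarrow> 'c \<Rightarrow> real) \<Rightarrow> nat \<Rightarrow> (nat \<Rightarrow> real)
    \<Rightarrow> (nat \<Rightarrow> 'r \<Rightarrow> real) \<Rightarrow> (nat \<Rightarrow> 'c \<Rightarrow> real) \<Rightarrow> bool" where
  "is_svd Rw Cl X k \<sigma> u v \<longleftrightarrow>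
     (\<forall>d<k. \<sigma> d \<ge> 0) \<and>
     (\<forall>d<k. \<forall>e<k. (\<Sum>r\<in>Rw. u d r * u e r) = (if d = e then 1 else 0)) \<and>
     (\<forall>d<k. \<forall>e<k. (\<Sum>c\<in>Cl. v d c * v e c) = (if d = e then 1 else 0)) \<and>
     (\<forall>r\<in>Rw. \<forall>c\<in>Cl. X r c = (\<Sum>d<k. \<sigma> d * u d r * v d c))"

text \<open>Entropy of the normalized squared singular values (0 ln 0 := 0; if all are 0 the
normalization gives 0, so the entropy is 0).\<close>
definition sv_entropy :: "nat \<Rightarrow> (nat \<Rightarrow> real) \<Rightarrow> real" where
  "sv_entropy k \<sigma> = - (\<Sum>d<k. let \<rho> = (\<sigma> d)\<^sup>2 / (\<Sum>e<k. (\<sigma> e)\<^sup>2) in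
                              if \<rho> = 0 then 0 else \<rho> * ln \<rho>)"

text \<open>Quantum entanglement QE(A; J) for a tensor with axes 1..M, computed from the singular
values of [[A; J]] (independent of the chosen SVD).\<close>
definition QE :: "(nat \<Rightarrow> nat) \<Rightarrow> nat \<Rightarrow> ((nat \<Rightarrow> nat) \<Rightarrow> real) \<Rightarrow> nat set \<Rightarrow> real" where
  "QE D M A J = (SOME e. \<exists>k \<sigma> u v.
      is_svd (tidx D J) (tidx D ({1..M} - J)) (matricize A J) k \<sigma> u v \<and> e = sv_entropy k \<sigma>)"

definition DJ :: "(nat \<Rightarrow> nat) \<Rightarrow> nat \<Rightarrow> nat set \<Rightarrow> nat" where
  "DJ D M J = min (\<Prod>n\<in>J. D n) (\<Prod>n\<in>{1..M} - J. D n)"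

text \<open>Locally connected tensor network. phi0 n r j is the j-th entry of phi^(0,n)_r;
a l n r ik is a^(l,n)_{r,i_1,...,i_{2^P}} with ik k = i_k; atop ik is the top coefficient.\<close>
primrec tn_phi :: "nat \<Rightarrow> nat \<Rightarrow> (nat \<Rightarrow> nat \<Rightarrow> nat \<Rightarrow> real) \<Rightarrow> (nat \<Rightarrow> nat \<Rightarrow> nat \<Rightarrow> (nat \<Rightarrow> nat) \<Rightarrow> real)
    \<Rightarrow> nat \<Rightarrow> nat \<Rightarrow> nat \<Rightarrow> (nat \<Rightarrow> nat) \<Rightarrow> real" where
  "tn_phi P R phi0 a 0 n r idx = phi0 n r (idx n)"
| "tn_phi P R phi0 a (Suc l) n r idx =
     (\<Sum>ik\<in>PiE {1..2^P} (\<lambda>_. {1..R}).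
        a (Suc l) n r ik * (\<Prod>k\<in>{1..2^P}. tn_phi P R phi0 a l (2^P * (n - 1) + k) (ik k) idx))"

definition tn_tensor :: "nat \<Rightarrow> nat \<Rightarrow> nat \<Rightarrow> (nat \<Rightarrow> nat \<Rightarrow> nat \<Rightarrow> real)
    \<Rightarrow> (nat \<Rightarrow> nat \<Rightarrow> nat \<Rightarrow> (nat \<Rightarrow> nat) \<Rightarrow> real) \<Rightarrow> ((nat \<Rightarrow> nat) \<Rightarrow> real) \<Rightarrow> (nat \<Rightarrow> nat) \<Rightarrow> real" where
  "tn_tensor P L R phi0 a atop idx =
     (\<Sum>ik\<in>PiE {1..2^P} (\<lambda>_. {1..R}).
        atop ik * (\<Prod>k\<in>{1..2^P}. tn_phi P R phi0 a (L - 1) k (ik k) idx))"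

definition tn_generated :: "nat \<Rightarrow> nat \<Rightarrow> nat \<Rightarrow> (nat \<Rightarrow> nat) \<Rightarrow> ((nat \<Rightarrow> nat) \<Rightarrow> real) \<Rightarrow> bool" where
  "tn_generated P L R D W \<longleftrightarrow> (\<exists>phi0 a atop. \<forall>idx\<in>tidx D {1..(2^L)^P}.
      W idx = tn_tensor P L R phi0 a atop idx)"

definition cube :: "nat \<Rightarrow> nat \<Rightarrow> (nat \<Rightarrow> nat) set" where
  "cube N P = PiE {1..P} (\<lambda>_. {1..N})"

definition cubic_block :: "nat \<Rightarrow> nat \<Rightarrow> (nat \<Rightarrow> nat) \<Rightarrow> (nat \<Rightarrow> nat) set" where
  "cubic_block P s k = PiE {1..P} (\<lambda>p. {s * (k p - 1) + 1 .. s * k p})"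

definition compatible :: "nat \<Rightarrow> nat \<Rightarrow> ((nat \<Rightarrow> nat) \<Rightarrow> nat) \<Rightarrow> bool" where
  "compatible P L \<mu> \<longleftrightarrow> bij_betw \<mu> (cube (2^L) P) {1..(2^L)^P} \<and>
     (\<forall>l\<in>{0..L}. \<forall>n\<in>{1..2^(P*(L-l))}. \<exists>s k.
        {x\<in>cube (2^L) P. \<mu> x \<in> {2^(P*l) * (n - 1) + 1 .. 2^(P*l) * n}} = cubic_block P s k)"

definition canon_K :: "nat \<Rightarrow> nat \<Rightarrow> nat \<Rightarrow> (nat \<Rightarrow> nat) \<Rightarrow> (nat \<Rightarrow> nat) set" where
  "canon_K P L l n = PiE {1..P} (\<lambda>p. {2^(L-l) * (n p - 1) + 1 .. 2^(L-l) * n p})"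

end

theory Submission
  imports Defs "HOL-Analysis.Analysis"
begin
definition sph :: "'a set \<Rightarrow> ('a \<Rightarrow> real) set" where
  "sph S = {u. (\<forall>x. x \<notin> S \<longrightarrow> u x = 0) \<and> (\<Sum>x\<in>S. (u x)\<^sup>2) = 1}"

lemma compact_box: "compact (PiE UNIV (\<lambda>x. if x \<in> S then {-1..1::real} else {0}))"
proof -
  have "compactin (product_topology (\<lambda>i. euclidean) UNIV) (PiE UNIV (\<lambda>x. if x \<in> S then {-1..1::real} else {0}))"
    by (subst compactin_PiE) auto
  then show ?thesis by (simp add: euclidean_product_topology)
qed

lemma sph_sub_box:
  assumes "finite S" shows "sph S \<subseteq> PiE UNIV (\<lambda>x. if x \<in> S then {-1..1::real} else {0})"
proof
  fix u assume u: "u \<in> sph S"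
  have "\<bar>u x\<bar> \<le> 1" if "x \<in> S" for x
  proof -
    have "(u x)\<^sup>2 \<le> (\<Sum>y\<in>S. (u y)\<^sup>2)"
      using member_le_sum[of x S "\<lambda>y. (u y)\<^sup>2"] that assms by auto
    then have "(u x)\<^sup>2 \<le> 1" using u by (simp add: sph_def)
    then show ?thesis by (simp add: abs_square_le_1)
  qed
  then show "u \<in> PiE UNIV (\<lambda>x. if x \<in> S then {-1..1::real} else {0})"
    using u by (auto simp: sph_def PiE_def abs_le_iff)
qed

lemma closed_sph: "finite S \<Longrightarrow> closed (sph S)"
proof -
  assume fin: "finite S"
  have "sph S = (\<Inter>x\<in>-S. {u. u x = 0}) \<inter> {u. (\<Sum>x\<in>S. (u x)\<^sup>2) = 1}"
    by (auto simp: sph_def)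
  moreover have "closed {u::'a\<Rightarrow>real. u x = 0}" for x
    by (rule closed_Collect_eq) (auto intro: continuous_on_product_coordinates)
  moreover have "closed {u::'a\<Rightarrow>real. (\<Sum>x\<in>S. (u x)\<^sup>2) = 1}"
    by (rule closed_Collect_eq) (auto intro!: continuous_intros continuous_on_product_coordinates)
  ultimately show ?thesis by (metis closed_INT closed_Int)
qed

lemma compact_sph: "finite S \<Longrightarrow> compact (sph S)"
  using compact_box closed_sph sph_sub_box
  by (metis compact_Int_closed inf.absorb_iff2)

definition orthon :: "'a set \<Rightarrow> nat \<Rightarrow> (nat \<Rightarrow> 'a \<Rightarrow> real) \<Rightarrow> bool" where
  "orthon S k u \<longleftrightarrow> (\<forall>d<k. \<forall>e<k. (\<Sum>r\<in>S. u d r * u e r) = (if d = e then 1 else 0))"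

lemma orthon_combo:
  assumes "orthon S m e"
  shows "(\<Sum>r\<in>S. (\<Sum>d<m. a d * e d r) * (\<Sum>d<m. b d * e d r)) = (\<Sum>d<m. a d * b d)"
proof -
  have "(\<Sum>r\<in>S. (\<Sum>d<m. a d * e d r) * (\<Sum>d<m. b d * e d r))
      = (\<Sum>r\<in>S. \<Sum>d<m. \<Sum>d'<m. a d * b d' * (e d r * e d' r))"
    by (simp add: sum_product algebra_simps)
  also have "\<dots> = (\<Sum>d<m. \<Sum>d'<m. a d * b d' * (\<Sum>r\<in>S. e d r * e d' r))"
    by (simp add: sum_distrib_left sum.swap[of _ S])
  also have "\<dots> = (\<Sum>d<m. \<Sum>d'<m. a d * b d' * (if d = d' then 1 else 0))"
    using assms unfolding orthon_def by (intro sum.cong refl) auto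
  also have "\<dots> = (\<Sum>d<m. a d * b d)"
    by (simp add: if_distrib cong: if_cong)
  finally show ?thesis .
qed

lemma orthon_inner_combo:
  assumes "orthon S m e"
  shows "(\<Sum>r\<in>S. x r * (\<Sum>d<m. a d * e d r)) = (\<Sum>d<m. a d * (\<Sum>r\<in>S. x r * e d r))"
  by (simp add: sum_distrib_left sum.swap[of _ S] algebra_simps)

lemma bessel:
  assumes "orthon S m e" "finite S"
  shows "(\<Sum>d<m. (\<Sum>r\<in>S. x r * e d r)\<^sup>2) \<le> (\<Sum>r\<in>S. (x r)\<^sup>2)"
proof -
  define a where "a d = (\<Sum>r\<in>S. x r * e d r)" for d
  have "0 \<le> (\<Sum>r\<in>S. (x r - (\<Sum>d<m. a d * e d r))\<^sup>2)"
    by (intro sum_nonneg) auto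
  also have "\<dots> = (\<Sum>r\<in>S. (x r)\<^sup>2) - 2 * (\<Sum>r\<in>S. x r * (\<Sum>d<m. a d * e d r))
        + (\<Sum>r\<in>S. (\<Sum>d<m. a d * e d r) * (\<Sum>d<m. a d * e d r))"
    by (simp add: power2_eq_square algebra_simps sum_subtractf sum.distrib sum_distrib_left)
  also have "\<dots> = (\<Sum>r\<in>S. (x r)\<^sup>2) - (\<Sum>d<m. (a d)\<^sup>2)"
    unfolding orthon_combo[OF assms(1)] orthon_inner_combo[OF assms(1)]
    by (simp add: a_def power2_eq_square)
  finally show ?thesis by (simp add: a_def)
qed

lemma orthon_card:
  assumes "orthon S k u" "finite S"
  shows "k \<le> card S"
proof -
  have "real k = (\<Sum>d<k. \<Sum>r\<in>S. (u d r)\<^sup>2)"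
    using assms(1) unfolding orthon_def by (simp add: power2_eq_square)
  also have "\<dots> = (\<Sum>r\<in>S. \<Sum>d<k. (\<Sum>r'\<in>S. (if r' = r then 1 else 0) * u d r')\<^sup>2)"
  proof -
    have h: "(\<Sum>r'\<in>S. (if r' = r then 1 else 0) * u d r') = u d r" if "r \<in> S" for r d
    proof -
      have "(\<Sum>r'\<in>S. (if r' = r then 1 else 0) * u d r') = (\<Sum>r'\<in>S. if r' = r then u d r' else 0)"
        by (rule sum.cong) auto
      then show ?thesis using that assms(2) by simp
    qed
    show ?thesis using assms(2) by (subst sum.swap) (simp add: h)
  qed
  also have "\<dots> \<le> (\<Sum>r\<in>S. \<Sum>r'\<in>S. ((if r' = r then 1 else 0::real))\<^sup>2)"
    by (intro sum_mono bessel assms)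
  also have "\<dots> = real (card S)"
  proof -
    have "(\<Sum>r'\<in>S. ((if r' = r then 1 else 0::real))\<^sup>2) = 1" if "r \<in> S" for r
    proof -
      have "(\<Sum>r'\<in>S. ((if r' = r then 1 else 0::real))\<^sup>2) = (\<Sum>r'\<in>S. if r' = r then 1 else 0)"
        by (rule sum.cong) auto
      then show ?thesis using that assms(2) by simp
    qed
    then show ?thesis by simp
  qed
  finally show ?thesis by simp
qed

lemma orthon_Suc:
  assumes "orthon S k u" "\<forall>d<k. (\<Sum>r\<in>S. u d r * w r) = 0" "(\<Sum>r\<in>S. w r * w r) = 1"
  shows "orthon S (Suc k) (u(k:=w))"
  using assms unfolding orthon_def
  by (auto simp: less_Suc_eq mult.commute)

lemma sph_ind: "x \<in> S \<Longrightarrow> finite S \<Longrightarrow> (\<lambda>y. if y = x then c else 0) \<in> sph S \<longleftrightarrow> c\<^sup>2 = 1"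
proof -
  assume "x \<in> S" "finite S"
  have "(\<Sum>y\<in>S. ((if y = x then c else 0))\<^sup>2) = (\<Sum>y\<in>S. if y = x then c\<^sup>2 else 0)"
    by (rule sum.cong) auto
  then show ?thesis using \<open>x \<in> S\<close> \<open>finite S\<close> by (auto simp: sph_def)
qed

lemma max_exists:
  fixes Z :: "'r \<Rightarrow> 'c \<Rightarrow> real"
  assumes "finite Rw" "finite Cl" "Rw \<noteq> {}" "Cl \<noteq> {}"
  shows "\<exists>u\<in>sph Rw. \<exists>v\<in>sph Cl. \<forall>u'\<in>sph Rw. \<forall>v'\<in>sph Cl.
     (\<Sum>r\<in>Rw. u' r * (\<Sum>c\<in>Cl. Z r c * v' c)) \<le> (\<Sum>r\<in>Rw. u r * (\<Sum>c\<in>Cl. Z r c * v c))"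
proof -
  have cpt: "compact (sph Rw \<times> sph Cl)"
    using compact_sph[OF assms(1)] compact_sph[OF assms(2)] by (rule compact_Times)
  obtain x0 where "x0 \<in> Rw" using assms by auto
  obtain y0 where "y0 \<in> Cl" using assms by auto
  have ne: "sph Rw \<times> sph Cl \<noteq> {}"
    using sph_ind[OF \<open>x0 \<in> Rw\<close> assms(1), of 1] sph_ind[OF \<open>y0 \<in> Cl\<close> assms(2), of 1] by auto
  have cont: "continuous_on (sph Rw \<times> sph Cl)
      (\<lambda>p. (\<Sum>r\<in>Rw. fst p r * (\<Sum>c\<in>Cl. Z r c * snd p c)))"
  proof -
    have c1: "continuous_on UNIV (\<lambda>p::('r\<Rightarrow>real)\<times>('c\<Rightarrow>real). fst p r)" for r
      by (rule continuous_on_compose2[OF continuous_on_product_coordinates[of r] continuous_on_fst[OF continuous_on_id]]) auto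
    have c2: "continuous_on UNIV (\<lambda>p::('r\<Rightarrow>real)\<times>('c\<Rightarrow>real). snd p c)" for c
      by (rule continuous_on_compose2[OF continuous_on_product_coordinates[of c] continuous_on_snd[OF continuous_on_id]]) auto
    show ?thesis
      by (intro continuous_intros continuous_on_subset[OF c1] continuous_on_subset[OF c2]) auto
  qed
  from continuous_attains_sup[OF cpt ne cont] show ?thesis by auto
qed

lemma max_row_eq:
  fixes Z :: "'r \<Rightarrow> 'c \<Rightarrow> real"
  assumes fin: "finite Rw" and u: "u \<in> sph Rw"
    and mx: "\<forall>u'\<in>sph Rw. (\<Sum>r\<in>Rw. u' r * w r) \<le> (\<Sum>r\<in>Rw. u r * w r)"
  shows "\<forall>r\<in>Rw. w r = (\<Sum>r\<in>Rw. u r * w r) * u r"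
proof -
  define s where "s = (\<Sum>r\<in>Rw. u r * w r)"
  define N2 where "N2 = (\<Sum>r\<in>Rw. (w r)\<^sup>2)"
  have N2ge: "N2 \<ge> 0" unfolding N2_def by (auto intro: sum_nonneg)
  have uu: "(\<Sum>r\<in>Rw. (u r)\<^sup>2) = 1" using u by (simp add: sph_def)
  have key: "N2 \<le> s\<^sup>2 \<and> 0 \<le> s"
  proof (cases "N2 = 0")
    case True
    have "\<forall>r\<in>Rw. (w r)\<^sup>2 = 0"
      using True fin unfolding N2_def by (subst (asm) sum_nonneg_eq_0_iff) auto
    then have "s = 0" unfolding s_def by simp
    then show ?thesis using True by simp
  next
    case False
    then have np: "N2 > 0" using N2ge by simp
    define n where "n = sqrt N2"
    have n: "n > 0" "n * n = N2" using np by (auto simp: n_def)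
    define u' where "u' r = (if r \<in> Rw then w r / n else 0)" for r
    have "(\<Sum>r\<in>Rw. (u' r)\<^sup>2) = (\<Sum>r\<in>Rw. (w r)\<^sup>2 / (n * n))"
      by (rule sum.cong) (auto simp: u'_def power2_eq_square)
    also have "\<dots> = 1" using n np by (simp add: N2_def sum_divide_distrib[symmetric])
    finally have "u' \<in> sph Rw" by (auto simp: sph_def u'_def)
    then have "(\<Sum>r\<in>Rw. u' r * w r) \<le> s" using mx s_def by auto
    moreover have "(\<Sum>r\<in>Rw. u' r * w r) = (\<Sum>r\<in>Rw. (w r)\<^sup>2 / n)"
      by (rule sum.cong) (auto simp: u'_def power2_eq_square)
    moreover have "\<dots> = N2 / n" by (simp add: N2_def sum_divide_distrib)
    moreover have "N2 / n = n" using n(1) n(2)[symmetric] by (simp add: field_simps)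
    ultimately have "n \<le> s" by simp
    then show ?thesis using n by (smt (verit) mult_mono power2_eq_square)
  qed
  have "(\<Sum>r\<in>Rw. (w r - s * u r)\<^sup>2) = N2 - 2 * s * (\<Sum>r\<in>Rw. u r * w r) + s\<^sup>2 * (\<Sum>r\<in>Rw. (u r)\<^sup>2)"
    by (simp add: N2_def power2_eq_square algebra_simps sum_subtractf sum.distrib sum_distrib_left)
  also have "\<dots> = N2 - 2 * s * s + s\<^sup>2 * (\<Sum>r\<in>Rw. (u r)\<^sup>2)" by (simp add: s_def)
  also have "\<dots> \<le> 0" using key uu by (simp add: power2_eq_square)
  finally have le0: "(\<Sum>r\<in>Rw. (w r - s * u r)\<^sup>2) \<le> 0" .
  have "(\<Sum>r\<in>Rw. (w r - s * u r)\<^sup>2) = 0"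
    using le0 by (intro order_antisym sum_nonneg) auto
  then have "\<forall>r\<in>Rw. (w r - s * u r)\<^sup>2 = 0"
    using fin by (subst (asm) sum_nonneg_eq_0_iff) auto
  then show ?thesis by (auto simp: s_def)
qed

lemma sum_ind_left: "finite S \<Longrightarrow> x \<in> S \<Longrightarrow> (\<Sum>y\<in>S. (if y = x then c else 0) * f y) = (c::real) * f x"
proof -
  assume a: "finite S" "x \<in> S"
  have "(\<Sum>y\<in>S. (if y = x then c else 0) * f y) = (\<Sum>y\<in>S. if y = x then c * f y else 0)"
    by (rule sum.cong) auto
  then show ?thesis using a by simp
qed

lemma sum_ind_right: "finite S \<Longrightarrow> x \<in> S \<Longrightarrow> (\<Sum>y\<in>S. f y * (if y = x then c else 0)) = f x * (c::real)"
  using sum_ind_left[of S x c f] by (simp add: mult.commute)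

lemma step_core:
  fixes Z :: "'r \<Rightarrow> 'c \<Rightarrow> real"
  assumes fin: "finite Rw" "finite Cl" and ou: "orthon Rw k u" and ov: "orthon Cl k v"
    and zu: "\<forall>d<k. \<forall>c\<in>Cl. (\<Sum>r\<in>Rw. Z r c * u d r) = 0"
    and zv: "\<forall>d<k. \<forall>r\<in>Rw. (\<Sum>c\<in>Cl. Z r c * v d c) = 0"
    and r0: "r0 \<in> Rw" and c0: "c0 \<in> Cl" and nz: "Z r0 c0 \<noteq> 0"
  shows "\<exists>s u' v'. s > 0 \<and> orthon Rw (Suc k) (u(k:=u')) \<and> orthon Cl (Suc k) (v(k:=v')) \<and>
     (\<forall>d<Suc k. \<forall>c\<in>Cl. (\<Sum>r\<in>Rw. (Z r c - s * u' r * v' c) * (u(k:=u')) d r) = 0) \<and>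
     (\<forall>d<Suc k. \<forall>r\<in>Rw. (\<Sum>c\<in>Cl. (Z r c - s * u' r * v' c) * (v(k:=v')) d c) = 0)"
proof -
  obtain u' v' where u': "u' \<in> sph Rw" and v': "v' \<in> sph Cl" and
    mx: "\<forall>u''\<in>sph Rw. \<forall>v''\<in>sph Cl.
     (\<Sum>r\<in>Rw. u'' r * (\<Sum>c\<in>Cl. Z r c * v'' c)) \<le> (\<Sum>r\<in>Rw. u' r * (\<Sum>c\<in>Cl. Z r c * v' c))"
    using max_exists[OF fin, of Z] r0 c0 by blast
  define s where "s = (\<Sum>r\<in>Rw. u' r * (\<Sum>c\<in>Cl. Z r c * v' c))"
  have swap: "(\<Sum>r\<in>Rw. a r * (\<Sum>c\<in>Cl. Z r c * b c)) = (\<Sum>c\<in>Cl. b c * (\<Sum>r\<in>Rw. Z r c * a r))" for a b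
    by (simp add: sum_distrib_left sum.swap[of _ Rw] algebra_simps)
  have roweq: "\<forall>r\<in>Rw. (\<Sum>c\<in>Cl. Z r c * v' c) = s * u' r"
    using max_row_eq[OF fin(1) u', of "\<lambda>r. \<Sum>c\<in>Cl. Z r c * v' c"] mx v' unfolding s_def by blast
  have coleq: "\<forall>c\<in>Cl. (\<Sum>r\<in>Rw. Z r c * u' r) = s * v' c"
  proof -
    have "\<forall>v''\<in>sph Cl. (\<Sum>c\<in>Cl. v'' c * (\<Sum>r\<in>Rw. Z r c * u' r)) \<le> (\<Sum>c\<in>Cl. v' c * (\<Sum>r\<in>Rw. Z r c * u' r))"
      using mx u' by (simp add: swap[symmetric])
    from max_row_eq[OF fin(2) v' this] show ?thesis by (simp add: swap[symmetric] s_def)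
  qed
  have spos: "s > 0"
  proof -
    define g where "g = sgn (Z r0 c0)"
    have g2: "g\<^sup>2 = 1" using nz by (auto simp: g_def sgn_if)
    have h1: "(\<lambda>y. if y = r0 then 1 else 0) \<in> sph Rw" using sph_ind[OF r0 fin(1)] by simp
    have h2: "(\<lambda>y. if y = c0 then g else 0) \<in> sph Cl" using sph_ind[OF c0 fin(2)] g2 by simp
    have "(\<Sum>r\<in>Rw. (if r = r0 then 1 else 0) * (\<Sum>c\<in>Cl. Z r c * (if c = c0 then g else 0))) \<le> s"
      using mx[rule_format, OF h1 h2] unfolding s_def .
    also have "(\<Sum>r\<in>Rw. (if r = r0 then 1 else 0) * (\<Sum>c\<in>Cl. Z r c * (if c = c0 then g else 0))) = Z r0 c0 * g"
      using fin r0 c0 by (simp add: sum_ind_left sum_ind_right)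
    finally show ?thesis using nz by (auto simp: g_def sgn_if split: if_splits)
  qed
  have uu: "(\<Sum>r\<in>Rw. u' r * u' r) = 1" using u' by (simp add: sph_def power2_eq_square)
  have vv: "(\<Sum>c\<in>Cl. v' c * v' c) = 1" using v' by (simp add: sph_def power2_eq_square)
  have ortu: "\<forall>d<k. (\<Sum>r\<in>Rw. u d r * u' r) = 0"
  proof (intro allI impI)
    fix d assume d: "d < k"
    have "s * (\<Sum>r\<in>Rw. u d r * u' r) = (\<Sum>r\<in>Rw. u d r * (\<Sum>c\<in>Cl. Z r c * v' c))"
      using roweq by (simp add: sum_distrib_left algebra_simps)
    also have "\<dots> = (\<Sum>c\<in>Cl. v' c * (\<Sum>r\<in>Rw. Z r c * u d r))" by (rule swap)
    also have "\<dots> = 0" using zu d by simp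
    finally show "(\<Sum>r\<in>Rw. u d r * u' r) = 0" using spos by simp
  qed
  have ortv: "\<forall>d<k. (\<Sum>c\<in>Cl. v d c * v' c) = 0"
  proof (intro allI impI)
    fix d assume d: "d < k"
    have "s * (\<Sum>c\<in>Cl. v d c * v' c) = (\<Sum>c\<in>Cl. v d c * (\<Sum>r\<in>Rw. Z r c * u' r))"
      using coleq by (simp add: sum_distrib_left algebra_simps)
    also have "\<dots> = (\<Sum>r\<in>Rw. u' r * (\<Sum>c\<in>Cl. Z r c * v d c))" by (rule swap[symmetric])
    also have "\<dots> = 0" using zv d by simp
    finally show "(\<Sum>c\<in>Cl. v d c * v' c) = 0" using spos by simp
  qed
  have I1: "\<forall>d<Suc k. \<forall>c\<in>Cl. (\<Sum>r\<in>Rw. (Z r c - s * u' r * v' c) * (u(k:=u')) d r) = 0"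
  proof (intro allI impI ballI)
    fix d c assume d: "d < Suc k" and c: "c \<in> Cl"
    have e: "(\<Sum>r\<in>Rw. (Z r c - s * u' r * v' c) * w r) = (\<Sum>r\<in>Rw. Z r c * w r) - s * v' c * (\<Sum>r\<in>Rw. u' r * w r)" for w
      by (simp add: algebra_simps sum_subtractf sum_distrib_left)
    show "(\<Sum>r\<in>Rw. (Z r c - s * u' r * v' c) * (u(k:=u')) d r) = 0"
    proof (cases "d = k")
      case True
      then show ?thesis using e[of u'] coleq c uu by simp
    next
      case False
      then have "d < k" using d by simp
      then show ?thesis using e[of "u d"] False zu c ortu by (simp add: mult.commute)
    qed
  qed
  have I2: "\<forall>d<Suc k. \<forall>r\<in>Rw. (\<Sum>c\<in>Cl. (Z r c - s * u' r * v' c) * (v(k:=v')) d c) = 0"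
  proof (intro allI impI ballI)
    fix d r assume d: "d < Suc k" and r: "r \<in> Rw"
    have e: "(\<Sum>c\<in>Cl. (Z r c - s * u' r * v' c) * w c) = (\<Sum>c\<in>Cl. Z r c * w c) - s * u' r * (\<Sum>c\<in>Cl. v' c * w c)" for w
      by (simp add: algebra_simps sum_subtractf sum_distrib_left)
    show "(\<Sum>c\<in>Cl. (Z r c - s * u' r * v' c) * (v(k:=v')) d c) = 0"
    proof (cases "d = k")
      case True
      then show ?thesis using e[of v'] roweq r vv by simp
    next
      case False
      then have "d < k" using d by simp
      then show ?thesis using e[of "v d"] False zv r ortv by (simp add: mult.commute)
    qed
  qed
  show ?thesis
    using spos orthon_Suc[OF ou ortu uu] orthon_Suc[OF ov ortv vv] I1 I2 by blast
qed

definition resid :: "('r \<Rightarrow> 'c \<Rightarrow> real) \<Rightarrow> nat \<Rightarrow> (nat \<Rightarrow> real) \<Rightarrow> (nat \<Rightarrow> 'r \<Rightarrow> real) \<Rightarrow> (nat \<Rightarrow> 'c \<Rightarrow> real) \<Rightarrow> 'r \<Rightarrow> 'c \<Rightarrow> real" where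
  "resid X k \<sigma> u v r c = X r c - (\<Sum>d<k. \<sigma> d * u d r * v d c)"

definition svinv where
  "svinv Rw Cl X k \<sigma> u v \<longleftrightarrow> (\<forall>d<k. \<sigma> d \<ge> 0) \<and> orthon Rw k u \<and> orthon Cl k v \<and>
     (\<forall>d<k. \<forall>c\<in>Cl. (\<Sum>r\<in>Rw. resid X k \<sigma> u v r c * u d r) = 0) \<and>
     (\<forall>d<k. \<forall>r\<in>Rw. (\<Sum>c\<in>Cl. resid X k \<sigma> u v r c * v d c) = 0)"

lemma svinv_step:
  assumes fin: "finite Rw" "finite Cl" and inv: "svinv Rw Cl X k \<sigma> u v"
    and nz: "r0 \<in> Rw" "c0 \<in> Cl" "resid X k \<sigma> u v r0 c0 \<noteq> 0"
  shows "\<exists>\<sigma>' u' v'. svinv Rw Cl X (Suc k) \<sigma>' u' v'"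
proof -
  obtain s u' v' where s: "s > 0" and o1: "orthon Rw (Suc k) (u(k:=u'))" and o2: "orthon Cl (Suc k) (v(k:=v'))"
    and I1: "\<forall>d<Suc k. \<forall>c\<in>Cl. (\<Sum>r\<in>Rw. (resid X k \<sigma> u v r c - s * u' r * v' c) * (u(k:=u')) d r) = 0"
    and I2: "\<forall>d<Suc k. \<forall>r\<in>Rw. (\<Sum>c\<in>Cl. (resid X k \<sigma> u v r c - s * u' r * v' c) * (v(k:=v')) d c) = 0"
  proof -
    have ou: "orthon Rw k u" and ov: "orthon Cl k v"
      and zu: "\<forall>d<k. \<forall>c\<in>Cl. (\<Sum>r\<in>Rw. resid X k \<sigma> u v r c * u d r) = 0"
      and zv: "\<forall>d<k. \<forall>r\<in>Rw. (\<Sum>c\<in>Cl. resid X k \<sigma> u v r c * v d c) = 0"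
      using inv unfolding svinv_def by blast+
    from step_core[OF fin ou ov zu zv nz] show ?thesis using that by blast
  qed
  have re: "resid X (Suc k) (\<sigma>(k:=s)) (u(k:=u')) (v(k:=v')) r c = resid X k \<sigma> u v r c - s * u' r * v' c" for r c
  proof -
    have "(\<Sum>d<k. (\<sigma>(k:=s)) d * (u(k:=u')) d r * (v(k:=v')) d c) = (\<Sum>d<k. \<sigma> d * u d r * v d c)"
      by (rule sum.cong) auto
    then show ?thesis unfolding resid_def by (simp add: algebra_simps)
  qed
  have sg: "\<forall>d<Suc k. (\<sigma>(k:=s)) d \<ge> 0" using inv s unfolding svinv_def by (simp add: less_Suc_eq)
  have "svinv Rw Cl X (Suc k) (\<sigma>(k:=s)) (u(k:=u')) (v(k:=v'))"
    unfolding svinv_def re using sg o1 o2 I1 I2 by blast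
  then show ?thesis by blast
qed

lemma svd_exists:
  assumes fin: "finite Rw" "finite Cl"
  shows "\<exists>k \<sigma> u v. is_svd Rw Cl X k \<sigma> u v"
proof (rule ccontr)
  assume nex: "\<not> ?thesis"
  have "\<exists>\<sigma> u v. svinv Rw Cl X n \<sigma> u v" for n
  proof (induction n)
    case 0
    show ?case by (auto simp: svinv_def orthon_def)
  next
    case (Suc n)
    then obtain \<sigma> u v where inv: "svinv Rw Cl X n \<sigma> u v" by blast
    show ?case
    proof (cases "\<exists>r0\<in>Rw. \<exists>c0\<in>Cl. resid X n \<sigma> u v r0 c0 \<noteq> 0")
      case True
      then show ?thesis using svinv_step[OF fin inv] by blast
    next
      case False
      then have "\<forall>r\<in>Rw. \<forall>c\<in>Cl. X r c = (\<Sum>d<n. \<sigma> d * u d r * v d c)"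
        unfolding resid_def by auto
      then have "is_svd Rw Cl X n \<sigma> u v"
        using inv unfolding svinv_def is_svd_def orthon_def by blast
      then show ?thesis using nex by blast
    qed
  qed
  then obtain \<sigma> u v where "svinv Rw Cl X (Suc (card Rw)) \<sigma> u v" by blast
  then have "orthon Rw (Suc (card Rw)) u" unfolding svinv_def by blast
  then have "Suc (card Rw) \<le> card Rw" using orthon_card fin(1) by blast
  then show False by simp
qed

lemma gram_schmidt:
  fixes f :: "nat \<Rightarrow> 'a \<Rightarrow> real"
  assumes fin: "finite S"
  shows "\<exists>m e \<alpha>. m \<le> n \<and> orthon S m e \<and> (\<forall>i<n. \<forall>x\<in>S. f i x = (\<Sum>j<m. \<alpha> i j * e j x))"
proof (induction n)
  case 0
  show ?case by (rule exI[of _ 0]) (auto simp: orthon_def)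
next
  case (Suc n)
  then obtain m e \<alpha> where m: "m \<le> n" and oe: "orthon S m e"
    and rep: "\<forall>i<n. \<forall>x\<in>S. f i x = (\<Sum>j<m. \<alpha> i j * e j x)" by blast
  define a where "a j = (\<Sum>x\<in>S. f n x * e j x)" for j
  define w where "w x = f n x - (\<Sum>j<m. a j * e j x)" for x
  have ortw: "\<forall>j<m. (\<Sum>x\<in>S. e j x * w x) = 0"
  proof (intro allI impI)
    fix j assume j: "j < m"
    have "(\<Sum>x\<in>S. e j x * w x) = (\<Sum>x\<in>S. f n x * e j x) - (\<Sum>x\<in>S. e j x * (\<Sum>j<m. a j * e j x))"
      by (simp add: w_def algebra_simps sum_subtractf)
    also have "(\<Sum>x\<in>S. e j x * (\<Sum>j<m. a j * e j x)) = (\<Sum>j'<m. a j' * (\<Sum>x\<in>S. e j x * e j' x))"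
      by (rule orthon_inner_combo[OF oe])
    also have "\<dots> = (\<Sum>j'<m. a j' * (if j = j' then 1 else 0))"
      using oe j unfolding orthon_def by (intro sum.cong) auto
    also have "\<dots> = a j" using j by (simp add: if_distrib cong: if_cong)
    finally show "(\<Sum>x\<in>S. e j x * w x) = 0" by (simp add: a_def)
  qed
  show ?case
  proof (cases "(\<Sum>x\<in>S. (w x)\<^sup>2) = 0")
    case True
    then have w0: "\<forall>x\<in>S. w x = 0" using fin by (subst (asm) sum_nonneg_eq_0_iff) auto
    define \<alpha>' where "\<alpha>' = \<alpha>(n := a)"
    have "\<forall>i<Suc n. \<forall>x\<in>S. f i x = (\<Sum>j<m. \<alpha>' i j * e j x)"
    proof (intro allI impI ballI)
      fix i x assume i: "i < Suc n" and x: "x \<in> S"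
      show "f i x = (\<Sum>j<m. \<alpha>' i j * e j x)"
      proof (cases "i = n")
        case True then show ?thesis using w0 x by (simp add: \<alpha>'_def w_def)
      next
        case False then show ?thesis using rep i x by (simp add: \<alpha>'_def)
      qed
    qed
    then show ?thesis using m oe by (intro exI[of _ m] exI[of _ e] exI[of _ \<alpha>']) auto
  next
    case False
    define nr where "nr = sqrt (\<Sum>x\<in>S. (w x)\<^sup>2)"
    have "(\<Sum>x\<in>S. (w x)\<^sup>2) \<ge> 0" by (simp add: sum_nonneg)
    then have nrpos: "nr > 0" using False by (simp add: nr_def)
    have nr2: "nr * nr = (\<Sum>x\<in>S. (w x)\<^sup>2)" by (simp add: nr_def sum_nonneg)
    define e' where "e' = e(m := (\<lambda>x. w x / nr))"
    define \<alpha>' where "\<alpha>' i j = (if i < n then (if j < m then \<alpha> i j else 0) else (if j < m then a j else nr))" for i j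
    have oe': "orthon S (Suc m) e'"
      unfolding e'_def
    proof (rule orthon_Suc[OF oe])
      show "\<forall>d<m. (\<Sum>r\<in>S. e d r * (w r / nr)) = 0" using ortw by (simp add: sum_divide_distrib[symmetric])
      have "(\<Sum>r\<in>S. w r / nr * (w r / nr)) = (\<Sum>r\<in>S. (w r)\<^sup>2) / (nr * nr)"
        by (simp add: sum_divide_distrib power2_eq_square)
      then show "(\<Sum>r\<in>S. w r / nr * (w r / nr)) = 1" using nr2 nrpos False by simp
    qed
    have "\<forall>i<Suc n. \<forall>x\<in>S. f i x = (\<Sum>j<Suc m. \<alpha>' i j * e' j x)"
    proof (intro allI impI ballI)
      fix i x assume i: "i < Suc n" and x: "x \<in> S"
      have s1: "(\<Sum>j<m. \<alpha>' i j * e' j x) = (\<Sum>j<m. (if i < n then \<alpha> i j else a j) * e j x)"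
        by (rule sum.cong) (auto simp: \<alpha>'_def e'_def)
      show "f i x = (\<Sum>j<Suc m. \<alpha>' i j * e' j x)"
      proof (cases "i = n")
        case True
        then show ?thesis using s1 nrpos by (simp add: \<alpha>'_def e'_def w_def)
      next
        case False
        then have "i < n" using i by simp
        then show ?thesis using s1 rep x by (simp add: \<alpha>'_def e'_def)
      qed
    qed
    then show ?thesis using m oe' by (intro exI[of _ "Suc m"] exI[of _ e'] exI[of _ \<alpha>']) auto
  qed
qed

lemma col_bound:
  assumes "orthon S m e" "finite S"
  shows "(\<Sum>r\<in>S. (x r - (\<Sum>j<m. h j * e j r))\<^sup>2) \<ge> (\<Sum>r\<in>S. (x r)\<^sup>2) - (\<Sum>j<m. (\<Sum>r\<in>S. x r * e j r)\<^sup>2)"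
proof -
  define a where "a j = (\<Sum>r\<in>S. x r * e j r)" for j
  have "(\<Sum>r\<in>S. (x r - (\<Sum>j<m. h j * e j r))\<^sup>2) = (\<Sum>r\<in>S. (x r)\<^sup>2) - 2 * (\<Sum>r\<in>S. x r * (\<Sum>j<m. h j * e j r))
        + (\<Sum>r\<in>S. (\<Sum>j<m. h j * e j r) * (\<Sum>j<m. h j * e j r))"
    by (simp add: power2_eq_square algebra_simps sum_subtractf sum.distrib sum_distrib_left)
  also have "\<dots> = (\<Sum>r\<in>S. (x r)\<^sup>2) - 2 * (\<Sum>j<m. h j * a j) + (\<Sum>j<m. h j * h j)"
    unfolding orthon_combo[OF assms(1)] orthon_inner_combo[OF assms(1)] a_def by simp
  also have "\<dots> = (\<Sum>r\<in>S. (x r)\<^sup>2) - (\<Sum>j<m. (a j)\<^sup>2) + (\<Sum>j<m. (h j - a j)\<^sup>2)"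
    by (simp add: power2_eq_square algebra_simps sum_subtractf sum.distrib sum_distrib_left)
  also have "\<dots> \<ge> (\<Sum>r\<in>S. (x r)\<^sup>2) - (\<Sum>j<m. (a j)\<^sup>2)"
    by (simp add: sum_nonneg)
  finally show ?thesis by (simp add: a_def)
qed

lemma svd_frob:
  assumes svd: "is_svd Rw Cl X k \<sigma> u v" and fin: "finite Rw" "finite Cl"
  shows "(\<Sum>r\<in>Rw. \<Sum>c\<in>Cl. (X r c)\<^sup>2) = (\<Sum>d<k. (\<sigma> d)\<^sup>2)"
proof -
  have ou: "orthon Rw k u" and ov: "orthon Cl k v" and X: "\<forall>r\<in>Rw. \<forall>c\<in>Cl. X r c = (\<Sum>d<k. \<sigma> d * u d r * v d c)"
    using svd unfolding is_svd_def orthon_def by blast+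
  have "(\<Sum>r\<in>Rw. \<Sum>c\<in>Cl. (X r c)\<^sup>2) = (\<Sum>r\<in>Rw. \<Sum>c\<in>Cl. (\<Sum>d<k. (\<sigma> d * u d r) * v d c) * (\<Sum>d<k. (\<sigma> d * u d r) * v d c))"
    using X by (intro sum.cong refl) (simp add: power2_eq_square)
  also have "\<dots> = (\<Sum>r\<in>Rw. \<Sum>d<k. (\<sigma> d * u d r) * (\<sigma> d * u d r))"
    by (simp add: orthon_combo[OF ov])
  also have "\<dots> = (\<Sum>d<k. (\<sigma> d)\<^sup>2 * (\<Sum>r\<in>Rw. u d r * u d r))"
    by (subst sum.swap) (simp add: sum_distrib_left power2_eq_square algebra_simps)
  also have "\<dots> = (\<Sum>d<k. (\<sigma> d)\<^sup>2)"
    using ou unfolding orthon_def by (intro sum.cong) auto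
  finally show ?thesis .
qed

lemma svd_proj:
  assumes svd: "is_svd Rw Cl X k \<sigma> u v" and fin: "finite Rw" "finite Cl"
  shows "(\<Sum>c\<in>Cl. (\<Sum>r\<in>Rw. X r c * e r)\<^sup>2) = (\<Sum>d<k. (\<sigma> d)\<^sup>2 * (\<Sum>r\<in>Rw. u d r * e r)\<^sup>2)"
proof -
  have ov: "orthon Cl k v" and X: "\<forall>r\<in>Rw. \<forall>c\<in>Cl. X r c = (\<Sum>d<k. \<sigma> d * u d r * v d c)"
    using svd unfolding is_svd_def orthon_def by blast+
  have "\<forall>c\<in>Cl. (\<Sum>r\<in>Rw. X r c * e r) = (\<Sum>d<k. (\<sigma> d * (\<Sum>r\<in>Rw. u d r * e r)) * v d c)"
  proof
    fix c assume c: "c \<in> Cl"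
    have "(\<Sum>r\<in>Rw. X r c * e r) = (\<Sum>r\<in>Rw. (\<Sum>d<k. \<sigma> d * u d r * v d c) * e r)"
      using X c by (intro sum.cong) auto
    also have "\<dots> = (\<Sum>d<k. (\<sigma> d * (\<Sum>r\<in>Rw. u d r * e r)) * v d c)"
      by (simp add: sum_distrib_left sum_distrib_right sum.swap[of _ Rw] algebra_simps)
    finally show "(\<Sum>r\<in>Rw. X r c * e r) = (\<Sum>d<k. (\<sigma> d * (\<Sum>r\<in>Rw. u d r * e r)) * v d c)" .
  qed
  then have "(\<Sum>c\<in>Cl. (\<Sum>r\<in>Rw. X r c * e r)\<^sup>2) = (\<Sum>c\<in>Cl. (\<Sum>d<k. (\<sigma> d * (\<Sum>r\<in>Rw. u d r * e r)) * v d c) * (\<Sum>d<k. (\<sigma> d * (\<Sum>r\<in>Rw. u d r * e r)) * v d c))"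
    by (intro sum.cong) (auto simp: power2_eq_square)
  also have "\<dots> = (\<Sum>d<k. (\<sigma> d * (\<Sum>r\<in>Rw. u d r * e r)) * (\<sigma> d * (\<Sum>r\<in>Rw. u d r * e r)))"
    by (rule orthon_combo[OF ov])
  finally show ?thesis by (simp add: power2_eq_square algebra_simps)
qed

lemma ey:
  assumes svd: "is_svd Rw Cl X k \<sigma> u v" and fin: "finite Rw" "finite Cl"
    and Y: "\<forall>r\<in>Rw. \<forall>c\<in>Cl. Y r c = (\<Sum>i<n. f i r * g i c)"
  shows "\<exists>cc. (\<forall>d<k. 0 \<le> cc d \<and> cc d \<le> 1) \<and> (\<Sum>d<k. cc d) \<le> real n \<and>
     (\<Sum>d<k. (\<sigma> d)\<^sup>2 * (1 - cc d)) \<le> (\<Sum>r\<in>Rw. \<Sum>c\<in>Cl. (X r c - Y r c)\<^sup>2)"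
proof -
  have ou: "orthon Rw k u" and ov: "orthon Cl k v"
    using svd unfolding is_svd_def orthon_def by blast+
  obtain m e \<alpha> where m: "m \<le> n" and oe: "orthon Rw m e"
    and rep: "\<forall>i<n. \<forall>x\<in>Rw. f i x = (\<Sum>j<m. \<alpha> i j * e j x)"
    using gram_schmidt[OF fin(1), of n f] by blast
  define h where "h j c = (\<Sum>i<n. \<alpha> i j * g i c)" for j c
  have Y': "\<forall>r\<in>Rw. \<forall>c\<in>Cl. Y r c = (\<Sum>j<m. h j c * e j r)"
  proof (intro ballI)
    fix r c assume r: "r \<in> Rw" and c: "c \<in> Cl"
    have "Y r c = (\<Sum>i<n. (\<Sum>j<m. \<alpha> i j * e j r) * g i c)"
      using Y rep r c by (auto intro: sum.cong)
    also have "\<dots> = (\<Sum>j<m. h j c * e j r)"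
      by (simp add: h_def sum_distrib_left sum_distrib_right sum.swap[of _ "{..<n}"] algebra_simps)
    finally show "Y r c = (\<Sum>j<m. h j c * e j r)" .
  qed
  define cc where "cc d = (\<Sum>j<m. (\<Sum>r\<in>Rw. u d r * e j r)\<^sup>2)" for d
  have c1: "\<forall>d<k. 0 \<le> cc d \<and> cc d \<le> 1"
  proof (intro allI impI conjI)
    fix d assume d: "d < k"
    show "0 \<le> cc d" by (simp add: cc_def sum_nonneg)
    have "cc d \<le> (\<Sum>r\<in>Rw. (u d r)\<^sup>2)" unfolding cc_def by (rule bessel[OF oe fin(1)])
    also have "\<dots> = 1" using ou d unfolding orthon_def by (simp add: power2_eq_square)
    finally show "cc d \<le> 1" .
  qed
  have c2: "(\<Sum>d<k. cc d) \<le> real n"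
  proof -
    have "(\<Sum>d<k. cc d) = (\<Sum>j<m. \<Sum>d<k. (\<Sum>r\<in>Rw. e j r * u d r)\<^sup>2)"
      unfolding cc_def by (subst sum.swap) (simp add: mult.commute)
    also have "\<dots> \<le> (\<Sum>j<m. \<Sum>r\<in>Rw. (e j r)\<^sup>2)"
      by (intro sum_mono bessel[OF ou fin(1)])
    also have "\<dots> = real m" using oe unfolding orthon_def by (simp add: power2_eq_square)
    finally show ?thesis using m by simp
  qed
  have "(\<Sum>r\<in>Rw. \<Sum>c\<in>Cl. (X r c - Y r c)\<^sup>2) = (\<Sum>c\<in>Cl. \<Sum>r\<in>Rw. (X r c - (\<Sum>j<m. h j c * e j r))\<^sup>2)"
    using Y' by (subst sum.swap) (intro sum.cong refl, auto)
  also have "\<dots> \<ge> (\<Sum>c\<in>Cl. (\<Sum>r\<in>Rw. (X r c)\<^sup>2) - (\<Sum>j<m. (\<Sum>r\<in>Rw. X r c * e j r)\<^sup>2))"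
    by (intro sum_mono col_bound[OF oe fin(1)])
  finally have ineq: "(\<Sum>r\<in>Rw. \<Sum>c\<in>Cl. (X r c - Y r c)\<^sup>2) \<ge> (\<Sum>c\<in>Cl. (\<Sum>r\<in>Rw. (X r c)\<^sup>2) - (\<Sum>j<m. (\<Sum>r\<in>Rw. X r c * e j r)\<^sup>2))" .
  have a: "(\<Sum>c\<in>Cl. \<Sum>r\<in>Rw. (X r c)\<^sup>2) = (\<Sum>r\<in>Rw. \<Sum>c\<in>Cl. (X r c)\<^sup>2)" by (rule sum.swap)
  have b: "(\<Sum>c\<in>Cl. \<Sum>j<m. (\<Sum>r\<in>Rw. X r c * e j r)\<^sup>2) = (\<Sum>j<m. \<Sum>c\<in>Cl. (\<Sum>r\<in>Rw. X r c * e j r)\<^sup>2)" by (rule sum.swap)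
  have "(\<Sum>r\<in>Rw. \<Sum>c\<in>Cl. (X r c - Y r c)\<^sup>2) \<ge>
     (\<Sum>r\<in>Rw. \<Sum>c\<in>Cl. (X r c)\<^sup>2) - (\<Sum>j<m. \<Sum>c\<in>Cl. (\<Sum>r\<in>Rw. X r c * e j r)\<^sup>2)"
    using ineq by (simp only: sum_subtractf a b)
  also have "(\<Sum>j<m. \<Sum>c\<in>Cl. (\<Sum>r\<in>Rw. X r c * e j r)\<^sup>2) = (\<Sum>j<m. \<Sum>d<k. (\<sigma> d)\<^sup>2 * (\<Sum>r\<in>Rw. u d r * e j r)\<^sup>2)"
    by (intro sum.cong refl svd_proj[OF svd fin])
  also have "\<dots> = (\<Sum>d<k. (\<sigma> d)\<^sup>2 * cc d)"
    unfolding cc_def by (subst sum.swap) (simp add: sum_distrib_left)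
  also have "(\<Sum>r\<in>Rw. \<Sum>c\<in>Cl. (X r c)\<^sup>2) = (\<Sum>d<k. (\<sigma> d)\<^sup>2)" by (rule svd_frob[OF svd fin])
  finally have "(\<Sum>d<k. (\<sigma> d)\<^sup>2 * (1 - cc d)) \<le> (\<Sum>r\<in>Rw. \<Sum>c\<in>Cl. (X r c - Y r c)\<^sup>2)"
    by (simp add: algebra_simps sum_subtractf)
  then show ?thesis using c1 c2 by blast
qed

lemma logsum:
  fixes a b :: "nat \<Rightarrow> real"
  assumes a: "\<forall>d<k. a d \<ge> 0" and b: "\<forall>d<k. b d \<ge> 0" and ab: "\<forall>d<k. a d > 0 \<longrightarrow> b d > 0"
  shows "(\<Sum>d<k. if a d = 0 then 0 else a d * ln (b d / a d)) \<le> (\<Sum>d<k. a d) * ln ((\<Sum>d<k. b d) / (\<Sum>d<k. a d))"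
proof (cases "(\<Sum>d<k. a d) = 0")
  case True
  then have "\<forall>d<k. a d = 0" using a by (subst (asm) sum_nonneg_eq_0_iff) auto
  then show ?thesis using True by simp
next
  case False
  define A where "A = (\<Sum>d<k. a d)"
  define B where "B = (\<Sum>d<k. b d)"
  have "A \<ge> 0" unfolding A_def using a by (intro sum_nonneg) auto
  then have Apos: "A > 0" using False by (simp add: A_def)
  obtain d0 where d0: "d0 < k" "a d0 > 0"
    using False a by (metis (no_types, lifting) order_less_le sum.neutral lessThan_iff)
  have "b d0 \<le> B" unfolding B_def using b d0 by (intro member_le_sum) auto
  then have Bpos: "B > 0" using ab d0 by auto
  have tm: "(if a d = 0 then 0 else a d * ln (b d / a d)) \<le> a d * ln (B / A) + b d * A / B - a d" if d: "d < k" for d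
  proof (cases "a d = 0")
    case True then show ?thesis using b d Apos Bpos by simp
  next
    case False
    then have adp: "a d > 0" using a d by (simp add: order_less_le)
    then have bdp: "b d > 0" using ab d by simp
    have "ln ((b d / a d) / (B / A)) \<le> (b d / a d) / (B / A) - 1"
      by (rule ln_le_minus_one) (use adp bdp Apos Bpos in simp)
    moreover have "ln ((b d / a d) / (B / A)) = ln (b d / a d) - ln (B / A)"
      using adp bdp Apos Bpos by (simp add: ln_div ln_mult)
    ultimately have "ln (b d / a d) \<le> ln (B / A) + (b d / a d) / (B / A) - 1" by simp
    then have "a d * ln (b d / a d) \<le> a d * (ln (B / A) + (b d / a d) / (B / A) - 1)"
      using adp by (simp add: mult_left_mono)
    also have "\<dots> = a d * ln (B / A) + b d * A / B - a d"
      using adp Apos Bpos by (simp add: field_simps)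
    finally show ?thesis using False by simp
  qed
  have "(\<Sum>d<k. if a d = 0 then 0 else a d * ln (b d / a d)) \<le> (\<Sum>d<k. a d * ln (B / A) + b d * A / B - a d)"
    by (intro sum_mono tm) simp
  also have "\<dots> = A * ln (B / A) + B * A / B - A"
    by (simp add: A_def B_def sum_subtractf sum.distrib sum_distrib_right sum_divide_distrib[symmetric])
  also have "\<dots> = A * ln (B / A)" using Bpos by simp
  finally show ?thesis by (simp add: A_def B_def)
qed

lemma neg_xlnx_le_sqrt:
  fixes t :: real
  assumes "0 < t" shows "- (t * ln t) \<le> 2 * sqrt t"
proof -
  have sp: "sqrt t > 0" using assms by simp
  have "ln (1 / sqrt t) \<le> 1 / sqrt t - 1" by (rule ln_le_minus_one) (use sp in simp)
  moreover have "ln (1 / sqrt t) = - ln t / 2" using assms by (simp add: ln_div ln_sqrt)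
  ultimately have "- ln t \<le> 2 / sqrt t" by simp
  then have "t * (- ln t) \<le> t * (2 / sqrt t)" using assms by (intro mult_left_mono) auto
  also have "t * (2 / sqrt t) = 2 * sqrt t" using assms
    by (metis real_div_sqrt less_eq_real_def times_divide_eq_right mult.commute)
  finally show ?thesis by simp
qed

lemma neg_1mt_ln_le:
  fixes t :: real
  assumes "0 \<le> t" "t < 1" shows "- ((1 - t) * ln (1 - t)) \<le> t"
proof -
  have "ln (1 / (1 - t)) \<le> 1 / (1 - t) - 1" by (rule ln_le_minus_one) (use assms in simp)
  moreover have "ln (1 / (1 - t)) = - ln (1 - t)" using assms by (simp add: ln_div)
  ultimately have "- ln (1 - t) \<le> 1 / (1 - t) - 1" by simp
  then have "(1 - t) * (- ln (1 - t)) \<le> (1 - t) * (1 / (1 - t) - 1)"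
    using assms by (intro mult_left_mono) auto
  also have "\<dots> = t" using assms by (simp add: field_simps)
  finally show ?thesis by simp
qed

lemma ab_bound:
  fixes A B M :: real
  assumes "0 \<le> A" "A \<le> B" "B \<le> M" "A \<le> 1" "1 \<le> M"
  shows "A * ln (B / A) \<le> A * ln M + (if A = 0 then 0 else - (A * ln A))"
proof (cases "A = 0")
  case True then show ?thesis by simp
next
  case False
  then have Ap: "A > 0" using assms by simp
  then have Bp: "B > 0" using assms by simp
  have "ln (B / A) = ln B - ln A" using Ap Bp by (simp add: ln_div)
  moreover have "ln B \<le> ln M" using Bp assms by simp
  ultimately have "ln (B / A) \<le> ln M - ln A" by simp
  then have "A * ln (B / A) \<le> A * (ln M - ln A)" using Ap by (intro mult_left_mono) auto
  then show ?thesis using False by (simp add: algebra_simps)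
qed

lemma sqrt_ge_self: "0 \<le> x \<Longrightarrow> x \<le> 1 \<Longrightarrow> x \<le> sqrt (x::real)"
proof -
  assume a: "0 \<le> x" "x \<le> 1"
  have "sqrt x \<le> 1" using a by simp
  then have "sqrt x * sqrt x \<le> sqrt x" by (rule mult_left_le) (use a in auto)
  moreover have "sqrt x * sqrt x = x" using a by simp
  ultimately show ?thesis by linarith
qed

lemma entropy_bound:
  fixes \<sigma> cc :: "nat \<Rightarrow> real" and R K \<delta> :: real
  assumes Tpos: "(\<Sum>d<k. (\<sigma> d)\<^sup>2) > 0"
    and cc: "\<forall>d<k. 0 \<le> cc d \<and> cc d \<le> 1" and ccR: "(\<Sum>d<k. cc d) \<le> R" and R1: "1 \<le> R"
    and kK: "real k \<le> K"
    and tail: "(\<Sum>d<k. (\<sigma> d)\<^sup>2 * (1 - cc d)) \<le> \<delta>\<^sup>2 * (\<Sum>d<k. (\<sigma> d)\<^sup>2)"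
    and \<delta>: "0 \<le> \<delta>" "\<delta> \<le> 1/4"
  shows "sv_entropy k \<sigma> \<le> ln R + 2 * \<delta> * ln K + 2 * sqrt (2 * \<delta>)"
proof -
  define T where "T = (\<Sum>d<k. (\<sigma> d)\<^sup>2)"
  define \<rho> where "\<rho> d = (\<sigma> d)\<^sup>2 / T" for d
  have \<rho>0: "\<rho> d \<ge> 0" for d using Tpos by (simp add: \<rho>_def T_def)
  have \<rho>sum: "(\<Sum>d<k. \<rho> d) = 1" using Tpos by (simp add: \<rho>_def T_def sum_divide_distrib[symmetric])
  have \<rho>1: "\<rho> d \<le> 1" if "d < k" for d
  proof -
    have "\<rho> d \<le> (\<Sum>d<k. \<rho> d)" using that \<rho>0 by (intro member_le_sum) auto
    then show ?thesis using \<rho>sum by simp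
  qed
  have K1: "1 \<le> K"
  proof -
    have "k > 0" using Tpos by (cases k) auto
    then show ?thesis using kK by linarith
  qed
  define t where "t = (\<Sum>d<k. \<rho> d * (1 - cc d))"
  have tle: "t \<le> \<delta>\<^sup>2"
  proof -
    have "t = (\<Sum>d<k. (\<sigma> d)\<^sup>2 * (1 - cc d)) / T"
      by (simp add: t_def \<rho>_def sum_divide_distrib[symmetric] algebra_simps)
    also have "\<dots> \<le> \<delta>\<^sup>2" using tail Tpos by (simp add: T_def divide_le_eq)
    finally show ?thesis .
  qed
  have d2: "\<delta>\<^sup>2 \<le> \<delta> / 4"
  proof -
    have "\<delta> * \<delta> \<le> \<delta> * (1/4)" using \<delta> by (intro mult_left_mono) auto
    then show ?thesis by (simp add: power2_eq_square)
  qed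
  have t0: "0 \<le> t" unfolding t_def using \<rho>0 cc by (intro sum_nonneg) auto
  define a where "a d = cc d * \<rho> d" for d
  define a' where "a' d = (1 - cc d) * \<rho> d" for d
  define b' where "b' d = 1 - cc d" for d
  define g where "g x = (if x = 0 then 0 else - (x * ln (x::real)))" for x
  have split: "(if \<rho> d = 0 then 0 else \<rho> d * ln (\<rho> d)) =
     - ((if a d = 0 then 0 else a d * ln (cc d / a d)) + (if a' d = 0 then 0 else a' d * ln (b' d / a' d)))" for d
  proof (cases "\<rho> d = 0")
    case True then show ?thesis by (simp add: a_def a'_def)
  next
    case False
    have h: "(if c * \<rho> d = 0 then 0 else c * \<rho> d * ln (c / (c * \<rho> d))) = - (c * \<rho> d * ln (\<rho> d))" for c
    proof (cases "c = 0")
      case True then show ?thesis by simp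
    next
      case False2: False
      have "ln (c / (c * \<rho> d)) = - ln (\<rho> d)" using False False2 by (simp add: ln_div)
      then show ?thesis using False False2 by simp
    qed
    show ?thesis unfolding a_def a'_def b'_def h using False
      by (simp add: algebra_simps)
  qed
  have ent: "sv_entropy k \<sigma> = (\<Sum>d<k. if a d = 0 then 0 else a d * ln (cc d / a d)) + (\<Sum>d<k. if a' d = 0 then 0 else a' d * ln (b' d / a' d))"
    unfolding sv_entropy_def Let_def \<rho>_def[symmetric] T_def[symmetric] split
    by (simp add: sum.distrib sum_negf sum_subtractf)
  have A1: "(\<Sum>d<k. a d) = 1 - t"
    using \<rho>sum by (simp add: a_def t_def algebra_simps sum_subtractf)
  have L1: "(\<Sum>d<k. if a d = 0 then 0 else a d * ln (cc d / a d)) \<le> (1 - t) * ln R + g (1 - t)"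
  proof -
    have "(\<Sum>d<k. if a d = 0 then 0 else a d * ln (cc d / a d)) \<le> (\<Sum>d<k. a d) * ln ((\<Sum>d<k. cc d) / (\<Sum>d<k. a d))"
      using cc \<rho>0 by (intro logsum) (auto simp: a_def zero_less_mult_iff)
    also have "\<dots> \<le> (\<Sum>d<k. a d) * ln R + g (\<Sum>d<k. a d)"
      unfolding g_def
    proof (rule ab_bound)
      show "0 \<le> (\<Sum>d<k. a d)" using cc \<rho>0 by (auto simp: a_def intro!: sum_nonneg)
      show "(\<Sum>d<k. a d) \<le> (\<Sum>d<k. cc d)" unfolding a_def
        using cc \<rho>1 by (intro sum_mono) (auto intro: mult_left_le)
      show "(\<Sum>d<k. cc d) \<le> R" by (rule ccR)
      show "(\<Sum>d<k. a d) \<le> 1" using A1 t0 by simp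
      show "1 \<le> R" by (rule R1)
    qed
    finally show ?thesis using A1 by simp
  qed
  have L2: "(\<Sum>d<k. if a' d = 0 then 0 else a' d * ln (b' d / a' d)) \<le> t * ln K + g t"
  proof -
    have "(\<Sum>d<k. if a' d = 0 then 0 else a' d * ln (b' d / a' d)) \<le> (\<Sum>d<k. a' d) * ln ((\<Sum>d<k. b' d) / (\<Sum>d<k. a' d))"
      using cc \<rho>0 by (intro logsum) (auto simp: a'_def b'_def zero_less_mult_iff)
    also have "(\<Sum>d<k. a' d) = t" by (simp add: a'_def t_def mult.commute)
    also have "t * ln ((\<Sum>d<k. b' d) / t) \<le> t * ln K + g t"
      unfolding g_def
    proof (rule ab_bound)
      show "0 \<le> t" by (rule t0)
      show "t \<le> (\<Sum>d<k. b' d)" unfolding t_def b'_def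
      proof (intro sum_mono)
        fix d assume "d \<in> {..<k}"
        then have "\<rho> d \<le> 1" "0 \<le> 1 - cc d" using cc \<rho>1 by auto
        then show "\<rho> d * (1 - cc d) \<le> 1 - cc d" using mult_right_mono[of "\<rho> d" 1 "1 - cc d"] by simp
      qed
      have "(\<Sum>d<k. b' d) \<le> (\<Sum>d<k. 1)" unfolding b'_def using cc by (intro sum_mono) auto
      then show "(\<Sum>d<k. b' d) \<le> K" using kK by simp
      show "t \<le> 1" using tle \<delta> d2 by linarith
      show "1 \<le> K" by (rule K1)
    qed
    finally show ?thesis .
  qed
  have t1: "t < 1" using tle d2 \<delta> by linarith
  have g1: "g (1 - t) \<le> \<delta>\<^sup>2"
    using neg_1mt_ln_le[OF t0 t1] t1 tle by (simp add: g_def)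
  have g2: "g t \<le> 2 * \<delta>"
  proof (cases "t = 0")
    case True then show ?thesis using \<delta> by (simp add: g_def)
  next
    case False
    then have "g t \<le> 2 * sqrt t" using neg_xlnx_le_sqrt t0 by (simp add: g_def)
    also have "sqrt t \<le> \<delta>" using tle \<delta> by (metis real_sqrt_le_mono real_sqrt_abs abs_of_nonneg)
    finally show ?thesis by simp
  qed
  have lnR: "0 \<le> ln R" using R1 by simp
  have lnK: "0 \<le> ln K" using K1 by simp
  have "(1 - t) * ln R \<le> ln R" using t0 lnR mult_right_mono[of "1 - t" 1 "ln R"] by simp
  moreover have "t * ln K \<le> 2 * \<delta> * ln K"
    using tle d2 \<delta> lnK by (intro mult_right_mono) auto
  moreover have "2 * \<delta> + \<delta>\<^sup>2 \<le> 2 * sqrt (2 * \<delta>)"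
  proof -
    have "2 * \<delta> \<le> sqrt (2 * \<delta>)" using \<delta> by (intro sqrt_ge_self) auto
    then show ?thesis using d2 \<delta> by linarith
  qed
  ultimately show ?thesis using ent L1 L2 g1 g2 by linarith
qed

definition mrg :: "nat set \<Rightarrow> (nat \<Rightarrow> nat) \<Rightarrow> (nat \<Rightarrow> nat) \<Rightarrow> nat \<Rightarrow> nat" where
  "mrg J r c = (\<lambda>n. if n \<in> J then r n else c n)"

lemma matricize_mrg: "matricize A J r c = A (mrg J r c)"
  by (simp add: matricize_def mrg_def)

lemma tidx_bij:
  "bij_betw (\<lambda>i. restrict i S) (tidx D S) (PiE S (\<lambda>n. {..<D n}))"
proof (rule bij_betw_byWitness[where f' = "\<lambda>f n. if n \<in> S then f n else 0"])
  show "\<forall>a\<in>tidx D S. (\<lambda>n. if n \<in> S then restrict a S n else 0) = a"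
    by (auto simp: tidx_def fun_eq_iff)
  show "\<forall>a'\<in>PiE S (\<lambda>n. {..<D n}). restrict (\<lambda>n. if n \<in> S then a' n else 0) S = a'"
    by (auto simp: fun_eq_iff PiE_def extensional_def)
  show "(\<lambda>i. restrict i S) ` tidx D S \<subseteq> PiE S (\<lambda>n. {..<D n})"
    by (auto simp: tidx_def)
  show "(\<lambda>f n. if n \<in> S then f n else 0) ` PiE S (\<lambda>n. {..<D n}) \<subseteq> tidx D S"
    by (auto simp: tidx_def PiE_def Pi_def)
qed

lemma finite_tidx: "finite S \<Longrightarrow> finite (tidx D S)"
  using bij_betw_finite[OF tidx_bij] by (auto intro: finite_PiE)

lemma card_tidx: "finite S \<Longrightarrow> card (tidx D S) = (\<Prod>n\<in>S. D n)"
  using bij_betw_same_card[OF tidx_bij[of S D]] by (simp add: card_PiE)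

lemma mrg_bij:
  assumes "J \<subseteq> S"
  shows "bij_betw (\<lambda>(r, c). mrg J r c) (tidx D J \<times> tidx D (S - J)) (tidx D S)"
proof (rule bij_betw_byWitness[where f' = "\<lambda>i. (\<lambda>n. if n \<in> J then i n else 0, \<lambda>n. if n \<in> S - J then i n else 0)"])
  show "\<forall>a\<in>tidx D J \<times> tidx D (S - J).
       (\<lambda>i. (\<lambda>n. if n \<in> J then i n else 0, \<lambda>n. if n \<in> S - J then i n else 0)) ((\<lambda>(r, c). mrg J r c) a) = a"
    by (auto simp: tidx_def mrg_def fun_eq_iff)
  show "\<forall>a'\<in>tidx D S. (\<lambda>(r, c). mrg J r c) (\<lambda>n. if n \<in> J then a' n else 0, \<lambda>n. if n \<in> S - J then a' n else 0) = a'"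
    using assms by (auto simp: tidx_def mrg_def fun_eq_iff)
  show "(\<lambda>(r, c). mrg J r c) ` (tidx D J \<times> tidx D (S - J)) \<subseteq> tidx D S"
    using assms by (auto simp: tidx_def mrg_def)
  show "(\<lambda>i. (\<lambda>n. if n \<in> J then i n else 0, \<lambda>n. if n \<in> S - J then i n else 0)) ` tidx D S \<subseteq> tidx D J \<times> tidx D (S - J)"
    using assms by (auto simp: tidx_def)
qed

lemma sum_mrg:
  assumes "J \<subseteq> S" "finite S"
  shows "(\<Sum>i\<in>tidx D S. F i) = (\<Sum>r\<in>tidx D J. \<Sum>c\<in>tidx D (S - J). F (mrg J r c))"
proof -
  have "(\<Sum>i\<in>tidx D S. F i) = (\<Sum>p\<in>tidx D J \<times> tidx D (S - J). F ((\<lambda>(r, c). mrg J r c) p))"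
    by (rule sum.reindex_bij_betw[OF mrg_bij[OF assms(1)], symmetric])
  also have "\<dots> = (\<Sum>r\<in>tidx D J. \<Sum>c\<in>tidx D (S - J). F (mrg J r c))"
    unfolding sum.cartesian_product by (intro sum.cong) auto
  finally show ?thesis .
qed

lemma mrg_in_tidx:
  "J \<subseteq> S \<Longrightarrow> r \<in> tidx D J \<Longrightarrow> c \<in> tidx D (S - J) \<Longrightarrow> mrg J r c \<in> tidx D S"
  using mrg_bij[of J S D] by (auto simp: bij_betw_def)

lemma QE_prop:
  assumes "finite (tidx D J)" "finite (tidx D ({1..M} - J))"
    and "\<And>k \<sigma> u v. is_svd (tidx D J) (tidx D ({1..M} - J)) (matricize A J) k \<sigma> u v \<Longrightarrow> Q (sv_entropy k \<sigma>)"
  shows "Q (QE D M A J)"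
proof -
  have ex: "\<exists>e. \<exists>k \<sigma> u v. is_svd (tidx D J) (tidx D ({1..M} - J)) (matricize A J) k \<sigma> u v \<and> e = sv_entropy k \<sigma>"
    using svd_exists[OF assms(1,2)] by blast
  from someI_ex[OF ex] obtain k \<sigma> u v where
    h: "is_svd (tidx D J) (tidx D ({1..M} - J)) (matricize A J) k \<sigma> u v"
    and e: "(SOME e. \<exists>k \<sigma> u v. is_svd (tidx D J) (tidx D ({1..M} - J)) (matricize A J) k \<sigma> u v \<and> e = sv_entropy k \<sigma>) = sv_entropy k \<sigma>"
    by blast
  show ?thesis unfolding QE_def e using assms(3)[OF h] .
qed

lemma sv_entropy_nonneg:
  assumes "\<forall>d<k. True"
  shows "0 \<le> sv_entropy k \<sigma>"
proof -
  define T where "T = (\<Sum>e<k. (\<sigma> e)\<^sup>2)"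
  have "(let \<rho> = (\<sigma> d)\<^sup>2 / T in if \<rho> = 0 then 0 else \<rho> * ln \<rho>) \<le> 0" if "d < k" for d
  proof -
    have "(\<sigma> d)\<^sup>2 \<le> T" unfolding T_def using that by (intro member_le_sum) auto
    then have "(\<sigma> d)\<^sup>2 / T \<le> 1"
    proof (cases "T = 0")
      case False
      then have "T > 0" using \<open>(\<sigma> d)\<^sup>2 \<le> T\<close> by (smt (verit) zero_le_power2)
      then show ?thesis using \<open>(\<sigma> d)\<^sup>2 \<le> T\<close> by simp
    qed simp
    moreover have "0 \<le> (\<sigma> d)\<^sup>2 / T" unfolding T_def by (intro divide_nonneg_nonneg sum_nonneg) auto
    moreover have "x \<le> 1 \<Longrightarrow> 0 \<le> x \<Longrightarrow> x * ln x \<le> 0" for x :: real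
      by (cases "x = 0") (auto intro: mult_nonneg_nonpos)
    ultimately show ?thesis
      unfolding Let_def by presburger
  qed
  then have "(\<Sum>d<k. let \<rho> = (\<sigma> d)\<^sup>2 / T in if \<rho> = 0 then 0 else \<rho> * ln \<rho>) \<le> 0"
    by (intro sum_nonpos) auto
  then show ?thesis unfolding sv_entropy_def T_def by simp
qed

lemma part1_J:
  fixes A W :: "(nat \<Rightarrow> nat) \<Rightarrow> real" and R M :: nat
  assumes J: "J \<subseteq> {1..M}" and R: "R > 0"
    and fact: "\<forall>r\<in>tidx D J. \<forall>c\<in>tidx D ({1..M} - J). matricize W J r c = (\<Sum>i<R. f i r * g i c)"
    and e0: "0 \<le> \<epsilon>" and e1: "\<epsilon> \<le> fnorm D M A / 4" and e2: "fnorm D M (\<lambda>i. W i - A i) \<le> \<epsilon>"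
  shows "QE D M A J \<le> ln (real R) + 2 * \<epsilon> / fnorm D M A * ln (real (DJ D M J))
            + 2 * sqrt (2 * \<epsilon> / fnorm D M A)"
proof -
  define Rw where "Rw = tidx D J"
  define Cl where "Cl = tidx D ({1..M} - J)"
  have finJ: "finite J" using J finite_subset by blast
  have fR: "finite Rw" unfolding Rw_def using finJ by (rule finite_tidx)
  have fC: "finite Cl" unfolding Cl_def by (rule finite_tidx) simp
  have normA: "fnorm D M A = sqrt (\<Sum>r\<in>Rw. \<Sum>c\<in>Cl. (matricize A J r c)\<^sup>2)"
    unfolding fnorm_def Rw_def Cl_def matricize_mrg by (subst sum_mrg[OF J]) auto
  have normWA: "(fnorm D M (\<lambda>i. W i - A i))\<^sup>2 = (\<Sum>r\<in>Rw. \<Sum>c\<in>Cl. (matricize A J r c - matricize W J r c)\<^sup>2)"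
  proof -
    have "(fnorm D M (\<lambda>i. W i - A i))\<^sup>2 = (\<Sum>i\<in>tidx D {1..M}. (W i - A i)\<^sup>2)"
      unfolding fnorm_def by (simp add: sum_nonneg)
    also have "\<dots> = (\<Sum>r\<in>Rw. \<Sum>c\<in>Cl. (matricize A J r c - matricize W J r c)\<^sup>2)"
      unfolding Rw_def Cl_def matricize_mrg by (subst sum_mrg[OF J]) (auto simp: power2_commute)
    finally show ?thesis .
  qed
  show ?thesis
  proof (rule QE_prop[of D J M], fold Rw_def Cl_def)
    show "finite Rw" "finite Cl" using fR fC .
    fix k \<sigma> u v assume svd: "is_svd Rw Cl (matricize A J) k \<sigma> u v"
    have T: "(\<Sum>r\<in>Rw. \<Sum>c\<in>Cl. (matricize A J r c)\<^sup>2) = (\<Sum>d<k. (\<sigma> d)\<^sup>2)" by (rule svd_frob[OF svd fR fC])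
    define T where "T = (\<Sum>d<k. (\<sigma> d)\<^sup>2)"
    have nA: "fnorm D M A = sqrt T" using normA T by (simp add: T_def)
    have lnR: "0 \<le> ln (real R)" using R by simp
    show "sv_entropy k \<sigma> \<le> ln (real R) + 2 * \<epsilon> / fnorm D M A * ln (real (DJ D M J)) + 2 * sqrt (2 * \<epsilon> / fnorm D M A)"
    proof (cases "T = 0")
      case True
      then have "\<forall>d<k. (\<sigma> d)\<^sup>2 = 0" unfolding T_def by (subst (asm) sum_nonneg_eq_0_iff) auto
      then have "sv_entropy k \<sigma> = 0" unfolding sv_entropy_def by (simp add: Let_def)
      then show ?thesis using True nA lnR by simp
    next
      case False
      then have Tpos: "T > 0" unfolding T_def by (simp add: order_less_le sum_nonneg)
      define \<delta> where "\<delta> = \<epsilon> / sqrt T"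
      have d0: "0 \<le> \<delta>" using e0 Tpos by (simp add: \<delta>_def)
      have d1: "\<delta> \<le> 1/4" using e1 nA Tpos by (simp add: \<delta>_def divide_le_eq)
      obtain cc where cc: "\<forall>d<k. 0 \<le> cc d \<and> cc d \<le> 1" and ccR: "(\<Sum>d<k. cc d) \<le> real R"
        and tl: "(\<Sum>d<k. (\<sigma> d)\<^sup>2 * (1 - cc d)) \<le> (\<Sum>r\<in>Rw. \<Sum>c\<in>Cl. (matricize A J r c - matricize W J r c)\<^sup>2)"
      proof -
        have "\<forall>r\<in>Rw. \<forall>c\<in>Cl. matricize W J r c = (\<Sum>i<R. f i r * g i c)" using fact unfolding Rw_def Cl_def .
        from ey[OF svd fR fC this] show ?thesis using that by blast
      qed
      have "(\<Sum>r\<in>Rw. \<Sum>c\<in>Cl. (matricize A J r c - matricize W J r c)\<^sup>2) \<le> \<epsilon>\<^sup>2"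
      proof -
        have "0 \<le> fnorm D M (\<lambda>i. W i - A i)" unfolding fnorm_def by (simp add: sum_nonneg)
        then have "(fnorm D M (\<lambda>i. W i - A i))\<^sup>2 \<le> \<epsilon>\<^sup>2" using e2 by (intro power_mono) auto
        then show ?thesis using normWA by simp
      qed
      also have "\<epsilon>\<^sup>2 = \<delta>\<^sup>2 * T" using Tpos by (simp add: \<delta>_def power_divide)
      finally have tail: "(\<Sum>d<k. (\<sigma> d)\<^sup>2 * (1 - cc d)) \<le> \<delta>\<^sup>2 * (\<Sum>d<k. (\<sigma> d)\<^sup>2)"
        using tl by (simp add: T_def)
      have ou: "orthon Rw k u" and ov: "orthon Cl k v" using svd unfolding is_svd_def orthon_def by blast+
      have "k \<le> card Rw" "k \<le> card Cl" using orthon_card[OF ou fR] orthon_card[OF ov fC] .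
      then have kK: "real k \<le> real (DJ D M J)"
        unfolding DJ_def Rw_def Cl_def using card_tidx finJ by simp
      have R1: "1 \<le> real R" using R by simp
      have "sv_entropy k \<sigma> \<le> ln (real R) + 2 * \<delta> * ln (real (DJ D M J)) + 2 * sqrt (2 * \<delta>)"
        using Tpos unfolding T_def by (intro entropy_bound[OF _ cc ccR R1 kK tail d0 d1])
      then show ?thesis using nA by (simp add: \<delta>_def)
    qed
  qed
qed

definition blk :: "nat \<Rightarrow> nat \<Rightarrow> nat \<Rightarrow> nat set" where
  "blk P j m = {2^(P*j) * (m - 1) + 1 .. 2^(P*j) * m}"

lemma blk_iff:
  assumes "m \<ge> 1"
  shows "x \<in> blk P j m \<longleftrightarrow> x \<ge> 1 \<and> (x - 1) div 2^(P*j) = m - 1"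
proof -
  define B :: nat where "B = 2^(P*j)"
  have B: "B > 0" by (simp add: B_def)
  have "x \<in> blk P j m \<longleftrightarrow> x \<ge> 1 \<and> B * (m - 1) \<le> x - 1 \<and> x - 1 < B * Suc (m - 1)"
    using assms by (auto simp: blk_def B_def[symmetric] algebra_simps)
  also have "\<dots> \<longleftrightarrow> x \<ge> 1 \<and> (x - 1) div B = m - 1"
  proof -
    have "B * (m - 1) \<le> x - 1 \<and> x - 1 < B * Suc (m - 1) \<longleftrightarrow> (x - 1) div B = m - 1"
    proof
      assume "B * (m - 1) \<le> x - 1 \<and> x - 1 < B * Suc (m - 1)"
      then show "(x - 1) div B = m - 1" by (intro div_nat_eqI) auto
    next
      assume h: "(x - 1) div B = m - 1"
      have dm: "x - 1 = B * ((x - 1) div B) + (x - 1) mod B" by simp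
      have md: "(x - 1) mod B < B" using B by simp
      have a1: "B * ((x - 1) div B) \<le> x - 1" using dm by linarith
      have a2: "x - 1 < B * ((x - 1) div B) + B" using dm md by linarith
      show "B * (m - 1) \<le> x - 1 \<and> x - 1 < B * Suc (m - 1)" using a1 a2 unfolding h by simp
    qed
    then show ?thesis by blast
  qed
  finally show ?thesis by (simp add: B_def)
qed

lemma pow_Suc_split: "(2::nat)^(P * Suc j) = 2^(P*j) * 2^P"
  by (simp add: power_add[symmetric] algebra_simps)

lemma child_sub:
  assumes "m \<ge> 1" "k \<in> {1..2^P}"
  shows "blk P j (2^P * (m - 1) + k) \<subseteq> blk P (Suc j) m"
proof
  fix x assume x: "x \<in> blk P j (2^P * (m - 1) + k)"
  have c1: "2^P * (m - 1) + k \<ge> 1" using assms by simp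
  have x1: "x \<ge> 1" and q: "(x - 1) div 2^(P*j) = 2^P * (m - 1) + (k - 1)"
    using x blk_iff[OF c1] assms by auto
  have "(x - 1) div 2^(P * Suc j) = ((x - 1) div 2^(P*j)) div 2^P"
    by (simp only: pow_Suc_split div_mult2_eq)
  also have "\<dots> = m - 1" unfolding q
  proof (rule div_nat_eqI)
    have "2^P * m = 2^P * (m - 1) + 2^P" using assms by (cases m) auto
    then show "2 ^ P * (m - 1) + (k - 1) < 2 ^ P * Suc (m - 1)" using assms by auto
  qed simp
  finally show "x \<in> blk P (Suc j) m" using blk_iff[OF assms(1)] x1 by simp
qed

lemma blk_cover:
  assumes "m \<ge> 1" "x \<in> blk P (Suc j) m"
  shows "\<exists>k\<in>{1..2^P}. x \<in> blk P j (2^P * (m - 1) + k)"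
proof -
  define q where "q = (x - 1) div 2^(P*j)"
  have x1: "x \<ge> 1" and h: "(x - 1) div 2^(P * Suc j) = m - 1" using assms blk_iff by auto
  have "(x - 1) div 2^(P * Suc j) = (x - 1) div 2^(P*j) div 2^P" by (simp only: pow_Suc_split div_mult2_eq)
  then have qd: "q div 2^P = m - 1" using h by (simp add: q_def)
  have lo: "2^P * (m - 1) \<le> q" and hi: "q < 2^P * Suc (m - 1)"
  proof -
    have dm: "q = 2^P * (q div 2^P) + q mod 2^P" by simp
    have md: "q mod 2^P < 2^P" by simp
    have a1: "2^P * (q div 2^P) \<le> q" using dm by linarith
    have a2: "q < 2^P * (q div 2^P) + 2^P" using dm md by linarith
    show "2^P * (m - 1) \<le> q" "q < 2^P * Suc (m - 1)" using a1 a2 unfolding qd by auto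
  qed
  define k where "k = q - 2^P * (m - 1) + 1"
  have k: "k \<in> {1..2^P}" using lo hi by (simp add: k_def algebra_simps)
  have c1: "2^P * (m - 1) + k \<ge> 1" using k by simp
  have "q = 2^P * (m - 1) + k - 1" using lo by (simp add: k_def)
  then have "(x - 1) div 2^(P*j) = 2^P * (m - 1) + k - 1" by (simp add: q_def)
  then have "x \<in> blk P j (2^P * (m - 1) + k)"
    using x1 blk_iff[OF c1] by simp
  then show ?thesis using k by blast
qed

lemma blk_disj: "m \<ge> 1 \<Longrightarrow> m' \<ge> 1 \<Longrightarrow> m \<noteq> m' \<Longrightarrow> blk P j m \<inter> blk P j m' = {}"
proof -
  assume a: "m \<ge> 1" "m' \<ge> 1" "m \<noteq> m'"
  show ?thesis
  proof (rule ccontr)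
    assume "blk P j m \<inter> blk P j m' \<noteq> {}"
    then obtain x where "x \<in> blk P j m" "x \<in> blk P j m'" by blast
    then have "m - 1 = m' - 1" using blk_iff[OF a(1)] blk_iff[OF a(2)] by simp
    then show False using a by simp
  qed
qed

lemma same_block:
  assumes "l0 \<le> j" "m0 \<ge> 1" "x \<in> blk P l0 m0" "y \<in> blk P l0 m0"
  shows "(x - 1) div 2^(P*j) = (y - 1) div 2^(P*j)"
proof -
  have e: "(2::nat)^(P*j) = 2^(P*l0) * 2^(P*(j - l0))" using assms(1)
    by (simp add: power_add[symmetric] algebra_simps)
  show ?thesis using assms blk_iff[OF assms(2)] by (simp add: e div_mult2_eq)
qed

lemma tn_loc:
  assumes "m \<ge> 1" "\<forall>x\<in>blk P j m. idx x = idx' x"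
  shows "tn_phi P R phi0 a j m r idx = tn_phi P R phi0 a j m r idx'"
  using assms
proof (induction j arbitrary: m r)
  case 0
  then show ?case by (simp add: blk_def)
next
  case (Suc j)
  have "tn_phi P R phi0 a j (2^P * (m - 1) + k) rr idx = tn_phi P R phi0 a j (2^P * (m - 1) + k) rr idx'"
    if k: "k \<in> {1..2^P}" for k rr
  proof -
    show "tn_phi P R phi0 a j (2^P * (m - 1) + k) rr idx = tn_phi P R phi0 a j (2^P * (m - 1) + k) rr idx'"
      using Suc.IH[of "2^P * (m - 1) + k"] child_sub[OF Suc.prems(1) k, of j] Suc.prems k by auto
  qed
  then show ?case
    by (simp only: tn_phi.simps) (intro sum.cong refl arg_cong[where f="\<lambda>x. _ * x"] prod.cong, auto)
qed

definition indepJ :: "nat set \<Rightarrow> ((nat \<Rightarrow> nat) \<Rightarrow> real) \<Rightarrow> bool" where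
  "indepJ J F \<longleftrightarrow> (\<forall>i i'. (\<forall>x. x \<notin> J \<longrightarrow> i x = i' x) \<longrightarrow> F i = F i')"

definition formJ :: "nat set \<Rightarrow> nat \<Rightarrow> (nat \<Rightarrow> (nat \<Rightarrow> nat) \<Rightarrow> real) \<Rightarrow> ((nat \<Rightarrow> nat) \<Rightarrow> real) \<Rightarrow> bool" where
  "formJ J R \<phi> F \<longleftrightarrow> (\<exists>g. (\<forall>r. indepJ J (g r)) \<and> (\<forall>idx. F idx = (\<Sum>r\<in>{1..R}. \<phi> r idx * g r idx)))"

lemma indep_const: "indepJ J (\<lambda>_. c)" by (simp add: indepJ_def)

lemma indep_mult: "indepJ J F \<Longrightarrow> indepJ J G \<Longrightarrow> indepJ J (\<lambda>i. F i * G i)"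
  unfolding indepJ_def by metis

lemma indep_sum: "(\<And>s. s \<in> S \<Longrightarrow> indepJ J (F s)) \<Longrightarrow> indepJ J (\<lambda>i. \<Sum>s\<in>S. F s i)"
  unfolding indepJ_def by (metis (mono_tags, lifting) sum.cong)

lemma indep_prod: "(\<And>s. s \<in> S \<Longrightarrow> indepJ J (F s)) \<Longrightarrow> indepJ J (\<lambda>i. \<Prod>s\<in>S. F s i)"
  unfolding indepJ_def by (metis (mono_tags, lifting) prod.cong)

lemma form_mult: "formJ J R \<phi> F \<Longrightarrow> indepJ J H \<Longrightarrow> formJ J R \<phi> (\<lambda>i. F i * H i)"
proof -
  assume f: "formJ J R \<phi> F" and h: "indepJ J H"
  then obtain g where g: "\<forall>r. indepJ J (g r)" "\<forall>idx. F idx = (\<Sum>r\<in>{1..R}. \<phi> r idx * g r idx)"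
    unfolding formJ_def by blast
  show ?thesis unfolding formJ_def
    by (rule exI[of _ "\<lambda>r i. g r i * H i"]) (use g h in \<open>auto intro: indep_mult simp: sum_distrib_right sum_distrib_left algebra_simps\<close>)
qed

lemma form_sum:
  assumes "\<And>s. s \<in> S \<Longrightarrow> formJ J R \<phi> (F s)"
  shows "formJ J R \<phi> (\<lambda>i. \<Sum>s\<in>S. F s i)"
proof -
  have "\<forall>s\<in>S. \<exists>g. (\<forall>r. indepJ J (g r)) \<and> (\<forall>idx. F s idx = (\<Sum>r\<in>{1..R}. \<phi> r idx * g r idx))"
    using assms unfolding formJ_def by blast
  then obtain G where G: "\<forall>s\<in>S. (\<forall>r. indepJ J (G s r)) \<and> (\<forall>idx. F s idx = (\<Sum>r\<in>{1..R}. \<phi> r idx * G s r idx))"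
    by metis
  have "(\<Sum>s\<in>S. F s idx) = (\<Sum>r\<in>{1..R}. \<phi> r idx * (\<Sum>s\<in>S. G s r idx))" for idx
  proof -
    have "(\<Sum>s\<in>S. F s idx) = (\<Sum>s\<in>S. \<Sum>r\<in>{1..R}. \<phi> r idx * G s r idx)" using G by simp
    also have "\<dots> = (\<Sum>r\<in>{1..R}. \<phi> r idx * (\<Sum>s\<in>S. G s r idx))"
      by (subst sum.swap) (simp add: sum_distrib_left)
    finally show ?thesis .
  qed
  moreover have "\<forall>r. indepJ J (\<lambda>i. \<Sum>s\<in>S. G s r i)" using G by (auto intro: indep_sum)
  ultimately show ?thesis unfolding formJ_def by (intro exI[of _ "\<lambda>r i. \<Sum>s\<in>S. G s r i"]) auto
qed

lemma form_base: "r \<in> {1..R} \<Longrightarrow> formJ J R \<phi> (\<phi> r)"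
proof -
  assume r: "r \<in> {1..R}"
  have "\<phi> r idx = (\<Sum>r'\<in>{1..R}. \<phi> r' idx * (\<lambda>r' _. if r' = r then 1 else 0) r' idx)" for idx
    using sum_ind_right[of "{1..R}" r "\<lambda>r'. \<phi> r' idx" 1] r by simp
  then show ?thesis unfolding formJ_def by (intro exI[of _ "\<lambda>r' _. if r' = r then 1 else 0"]) (auto simp: indepJ_def)
qed

lemma blk_lo: "m0 \<ge> 1 \<Longrightarrow> 2^(P*l0) * (m0 - 1) + 1 \<in> blk P l0 m0"
proof -
  assume m0: "m0 \<ge> 1"
  have "2^(P*l0) * m0 = 2^(P*l0) * (m0 - 1) + 2^(P*l0)" using m0 by (cases m0) auto
  moreover have "(1::nat) \<le> 2^(P*l0)" by simp
  ultimately show ?thesis unfolding blk_def by auto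
qed

lemma loc_indep:
  assumes "m \<ge> 1" "J \<inter> blk P j m = {}"
  shows "indepJ J (tn_phi P R phi0 a j m r)"
  unfolding indepJ_def using tn_loc[OF assms(1)] assms(2) by blast

lemma step_form:
  assumes l0j: "l0 \<le> j" and m: "m \<ge> 1" and m0: "m0 \<ge> 1" and J: "J = blk P l0 m0"
    and Jsub: "J \<subseteq> blk P (Suc j) m"
    and IH: "\<forall>c\<ge>1. \<forall>r\<in>{1..R}. J \<subseteq> blk P j c \<longrightarrow> formJ J R \<phi> (tn_phi P R phi0 a j c r)"
  shows "formJ J R \<phi> (\<lambda>idx. \<Sum>ik\<in>PiE {1..2^P} (\<lambda>_. {1..R}).
            cf ik * (\<Prod>k\<in>{1..2^P}. tn_phi P R phi0 a j (2^P * (m - 1) + k) (ik k) idx))"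
proof -
  define x0 where "x0 = 2^(P*l0) * (m0 - 1) + 1"
  have x0J: "x0 \<in> J" unfolding J x0_def using blk_lo[OF m0] .
  obtain k0 where k0: "k0 \<in> {1..2^P}" and x0k0: "x0 \<in> blk P j (2^P * (m - 1) + k0)"
    using blk_cover[OF m] x0J Jsub by blast
  have dich: "J \<subseteq> blk P j c" if c: "c \<ge> 1" "x0 \<in> blk P j c" for c
  proof
    fix y assume y: "y \<in> J"
    have "(y - 1) div 2^(P*j) = (x0 - 1) div 2^(P*j)"
      using same_block[OF l0j m0] y x0J J by blast
    moreover have "y \<ge> 1" using y J blk_iff[OF m0] by auto
    ultimately show "y \<in> blk P j c" using c blk_iff[OF c(1)] by simp
  qed
  have Jk0: "J \<subseteq> blk P j (2^P * (m - 1) + k0)" using dich x0k0 k0 by simp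
  have Jdisj: "J \<inter> blk P j (2^P * (m - 1) + k) = {}" if k: "k \<in> {1..2^P}" "k \<noteq> k0" for k
  proof -
    have "blk P j (2^P * (m - 1) + k0) \<inter> blk P j (2^P * (m - 1) + k) = {}"
      using k k0 by (intro blk_disj) auto
    then show ?thesis using Jk0 by blast
  qed
  show ?thesis
  proof (rule form_sum)
    fix ik :: "nat \<Rightarrow> nat" assume ik: "ik \<in> PiE {1..2^P} (\<lambda>_. {1..R})"
    have eq: "(\<lambda>idx. cf ik * (\<Prod>k\<in>{1..2^P}. tn_phi P R phi0 a j (2^P * (m - 1) + k) (ik k) idx))
       = (\<lambda>idx. tn_phi P R phi0 a j (2^P * (m - 1) + k0) (ik k0) idx *
           (cf ik * (\<Prod>k\<in>{1..2^P} - {k0}. tn_phi P R phi0 a j (2^P * (m - 1) + k) (ik k) idx)))"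
      using k0 by (auto simp: prod.remove fun_eq_iff)
    have f1: "formJ J R \<phi> (tn_phi P R phi0 a j (2^P * (m - 1) + k0) (ik k0))"
    proof -
      have "ik k0 \<in> {1..R}" using ik k0 by (auto simp: PiE_def Pi_def)
      moreover have "2^P * (m - 1) + k0 \<ge> 1" using k0 by simp
      ultimately show ?thesis using IH Jk0 by blast
    qed
    have f2: "indepJ J (\<lambda>idx. cf ik * (\<Prod>k\<in>{1..2^P} - {k0}. tn_phi P R phi0 a j (2^P * (m - 1) + k) (ik k) idx))"
      by (intro indep_mult indep_const indep_prod loc_indep Jdisj) auto
    show "formJ J R \<phi> (\<lambda>idx. cf ik * (\<Prod>k\<in>{1..2^P}. tn_phi P R phi0 a j (2^P * (m - 1) + k) (ik k) idx))"
      unfolding eq by (rule form_mult[OF f1 f2])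
  qed
qed

lemma tree_form:
  assumes m0: "m0 \<ge> 1" and J: "J = blk P l0 m0"
  shows "\<forall>c\<ge>1. \<forall>r\<in>{1..R}. J \<subseteq> blk P (l0 + s) c \<longrightarrow> formJ J R (tn_phi P R phi0 a l0 m0) (tn_phi P R phi0 a (l0 + s) c r)"
proof (induction s)
  case 0
  show ?case
  proof (intro allI impI ballI)
    fix c r assume c: "c \<ge> 1" and r: "r \<in> {1..R}" and sub: "J \<subseteq> blk P (l0 + 0) c"
    have "2^(P*l0) * (m0 - 1) + 1 \<in> J" unfolding J using blk_lo[OF m0] .
    then have "c = m0" using sub blk_disj[OF c m0, of P l0] J by auto
    then show "formJ J R (tn_phi P R phi0 a l0 m0) (tn_phi P R phi0 a (l0 + 0) c r)"
      using form_base[OF r] by simp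
  qed
next
  case (Suc s)
  show ?case
  proof (intro allI impI ballI)
    fix c r assume c: "c \<ge> 1" and r: "r \<in> {1..R}" and sub: "J \<subseteq> blk P (l0 + Suc s) c"
    have e: "tn_phi P R phi0 a (l0 + Suc s) c r = (\<lambda>idx. \<Sum>ik\<in>PiE {1..2^P} (\<lambda>_. {1..R}).
            a (Suc (l0 + s)) c r ik * (\<Prod>k\<in>{1..2^P}. tn_phi P R phi0 a (l0 + s) (2^P * (c - 1) + k) (ik k) idx))"
      by (simp add: fun_eq_iff)
    show "formJ J R (tn_phi P R phi0 a l0 m0) (tn_phi P R phi0 a (l0 + Suc s) c r)"
      unfolding e by (rule step_form[OF _ c m0 J _ Suc.IH]) (use sub in auto)
  qed
qed

lemma sum_1R_shift: "(\<Sum>r\<in>{1..R}. h r) = (\<Sum>i<R. h (Suc i))"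
proof -
  have "{1..R} = Suc ` {..<R}"
  proof
    show "{1..R} \<subseteq> Suc ` {..<R}"
    proof
      fix x assume "x \<in> {1..R}"
      then have "x = Suc (x - 1)" "x - 1 < R" by auto
      then show "x \<in> Suc ` {..<R}" by blast
    qed
  qed auto
  then show ?thesis by (simp add: sum.reindex)
qed

lemma W_fact_tree:
  fixes W :: "(nat \<Rightarrow> nat) \<Rightarrow> real"
  assumes l0: "l0 < L" and m0: "m0 \<ge> 1" and J: "J = blk P l0 m0" and JM: "J \<subseteq> {1..(2^L)^P}"
    and gen: "tn_generated P L R D W"
  shows "\<exists>f g. \<forall>r\<in>tidx D J. \<forall>c\<in>tidx D ({1..(2^L)^P} - J). matricize W J r c = (\<Sum>i<R. f i r * g i c)"
proof -
  obtain phi0 a atop where W: "\<forall>idx\<in>tidx D {1..(2^L)^P}. W idx = tn_tensor P L R phi0 a atop idx"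
    using gen unfolding tn_generated_def by blast
  define \<phi> where "\<phi> = tn_phi P R phi0 a l0 m0"
  have IH: "\<forall>c\<ge>1. \<forall>r\<in>{1..R}. J \<subseteq> blk P (L - 1) c \<longrightarrow> formJ J R \<phi> (tn_phi P R phi0 a (L - 1) c r)"
    using tree_form[OF m0 J, of R "L - 1 - l0" phi0 a] l0 unfolding \<phi>_def by simp
  have blkL: "blk P (Suc (L - 1)) 1 = {1..(2^L)^P}"
    using l0 by (simp add: blk_def power_mult[symmetric] mult.commute)
  have tt: "tn_tensor P L R phi0 a atop = (\<lambda>idx. \<Sum>ik\<in>PiE {1..2^P} (\<lambda>_. {1..R}).
            atop ik * (\<Prod>k\<in>{1..2^P}. tn_phi P R phi0 a (L - 1) (2^P * (1 - 1) + k) (ik k) idx))"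
    by (simp add: fun_eq_iff tn_tensor_def)
  have "formJ J R \<phi> (tn_tensor P L R phi0 a atop)"
    unfolding tt by (rule step_form[OF _ _ m0 J _ IH]) (use l0 JM blkL in auto)
  then obtain g where g: "\<forall>r. indepJ J (g r)" and fe: "\<forall>idx. tn_tensor P L R phi0 a atop idx = (\<Sum>r\<in>{1..R}. \<phi> r idx * g r idx)"
    unfolding formJ_def by blast
  have "\<forall>r\<in>tidx D J. \<forall>c\<in>tidx D ({1..(2^L)^P} - J). matricize W J r c = (\<Sum>i<R. \<phi> (Suc i) r * g (Suc i) c)"
  proof (intro ballI)
    fix r c assume r: "r \<in> tidx D J" and c: "c \<in> tidx D ({1..(2^L)^P} - J)"
    have mi: "mrg J r c \<in> tidx D {1..(2^L)^P}" by (rule mrg_in_tidx[OF JM r c])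
    have p: "\<phi> r' (mrg J r c) = \<phi> r' r" for r'
      unfolding \<phi>_def by (rule tn_loc[OF m0]) (auto simp: mrg_def J)
    have q: "g r' (mrg J r c) = g r' c" for r'
      using g unfolding indepJ_def by (auto simp: mrg_def)
    have "matricize W J r c = (\<Sum>r'\<in>{1..R}. \<phi> r' r * g r' c)"
      unfolding matricize_mrg using W mi fe p q by simp
    then show "matricize W J r c = (\<Sum>i<R. \<phi> (Suc i) r * g (Suc i) c)"
      using sum_1R_shift[of "\<lambda>r'. \<phi> r' r * g r' c" R] by simp
  qed
  then show ?thesis by (intro exI[of _ "\<lambda>i. \<phi> (Suc i)"] exI[of _ "\<lambda>i. g (Suc i)"])
qed

lemma W_fact_root:
  fixes W :: "(nat \<Rightarrow> nat) \<Rightarrow> real" and R :: nat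
  assumes R: "R > 0"
  shows "\<exists>f g. \<forall>r\<in>tidx D {1..M}. \<forall>c\<in>tidx D ({1..M} - {1..M}). matricize W {1..M} r c = (\<Sum>i<R. f i r * g i c)"
proof -
  define f where "f (i::nat) r = (if i = 0 then matricize W {1..M} r (\<lambda>_. 0) else 0)" for i r
  have "\<forall>r\<in>tidx D {1..M}. \<forall>c\<in>tidx D ({1..M} - {1..M}). matricize W {1..M} r c = (\<Sum>i<R. f i r * 1)"
  proof (intro ballI)
    fix r c assume c: "c \<in> tidx D ({1..M} - {1..M})"
    then have "c = (\<lambda>_. 0)" by (auto simp: tidx_def fun_eq_iff)
    moreover have "(\<Sum>i<R. f i r * 1) = f 0 r"
      using R by (subst sum.remove[of _ 0]) (auto simp: f_def)
    ultimately show "matricize W {1..M} r c = (\<Sum>i<R. f i r * 1)" by (simp add: f_def)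
  qed
  then show ?thesis by (intro exI[of _ f] exI[of _ "\<lambda>_ _. 1"]) simp
qed

lemma card_blk: "m \<ge> 1 \<Longrightarrow> card (blk P j m) = 2^(P*j)"
  unfolding blk_def by (cases m) auto

lemma canon_blk:
  assumes P: "P > 0" and comp: "compatible P L \<mu>" and l: "l \<in> {0..L}"
    and n: "n \<in> PiE {1..P} (\<lambda>_. {1..2^l})"
  shows "\<exists>m\<in>{1..2^(P*l)}. \<mu> ` canon_K P L l n = blk P (L - l) m \<and> blk P (L - l) m \<subseteq> {1..(2^L)^P}"
proof -
  define j where "j = L - l"
  define s0 :: nat where "s0 = 2^j"
  have lL: "l \<le> L" using l by simp
  have L2: "(2::nat)^L = s0 * 2^l" using lL by (simp add: s0_def j_def power_add[symmetric])
  have M2: "((2::nat)^L)^P = 2^(P*j) * 2^(P*l)"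
    using lL by (simp add: j_def power_mult[symmetric] power_add[symmetric] algebra_simps)
  have bij: "bij_betw \<mu> (cube (2^L) P) {1..(2^L)^P}" using comp unfolding compatible_def by blast
  have np: "\<forall>p\<in>{1..P}. 1 \<le> n p \<and> n p \<le> 2^l" using n by (auto simp: PiE_def Pi_def)
  have cK: "canon_K P L l n = PiE {1..P} (\<lambda>p. {s0 * (n p - 1) + 1 .. s0 * n p})"
    unfolding canon_K_def s0_def j_def ..
  define x0 where "x0 = restrict (\<lambda>p. s0 * (n p - 1) + 1) {1..P}"
  have s0pos: "s0 > 0" by (simp add: s0_def)
  have x0K: "x0 \<in> canon_K P L l n"
  proof -
    have "s0 * (n p - 1) + 1 \<le> s0 * n p" if pP: "p \<in> {1..P}" for p
    proof -
      have "n p \<ge> 1" using np pP by blast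
      then obtain q where "n p = Suc q" by (cases "n p") auto
      then have "s0 * n p = s0 * (n p - 1) + s0" by simp
      then show ?thesis using s0pos by simp
    qed
    then show ?thesis unfolding cK x0_def by auto
  qed
  have Kcube: "canon_K P L l n \<subseteq> cube (2^L) P"
  proof
    fix y assume y: "y \<in> canon_K P L l n"
    have "y p \<in> {1..2^L}" if p: "p \<in> {1..P}" for p
    proof -
      have "y p \<in> {s0 * (n p - 1) + 1 .. s0 * n p}" using y p unfolding cK by auto
      then have a: "1 \<le> y p" "y p \<le> s0 * n p" by auto
      have "n p \<le> 2^l" using np p by blast
      then have "s0 * n p \<le> s0 * 2^l" by (rule mult_le_mono2)
      then have "s0 * n p \<le> 2^L" using L2 by simp
      then show ?thesis using a by simp
    qed
    then show "y \<in> cube (2^L) P" using y unfolding cube_def cK by (auto simp: PiE_def Pi_def)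
  qed
  have x0c: "x0 \<in> cube (2^L) P" using x0K Kcube by blast
  have mux0: "\<mu> x0 \<in> {1..(2^L)^P}" using bij x0c by (auto simp: bij_betw_def)
  define m where "m = (\<mu> x0 - 1) div 2^(P*j) + 1"
  have m1: "m \<ge> 1" by (simp add: m_def)
  have mublk: "\<mu> x0 \<in> blk P j m" using mux0 by (subst blk_iff[OF m1]) (auto simp: m_def)
  have mle: "m \<le> 2^(P*l)"
  proof -
    have "\<mu> x0 - 1 < 2^(P*j) * 2^(P*l)" using mux0 M2 by auto
    then have "(\<mu> x0 - 1) div 2^(P*j) < 2^(P*l)" by (simp add: div_less_iff_less_mult mult.commute)
    then show ?thesis by (simp add: m_def)
  qed
  have blkM: "blk P j m \<subseteq> {1..(2^L)^P}"
  proof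
    fix x assume x: "x \<in> blk P j m"
    have h: "2^(P*j) * m \<le> 2^(P*j) * 2^(P*l)" using mle by (rule mult_le_mono2)
    have x1: "1 \<le> x" and xle: "x \<le> 2^(P*j) * m" using x unfolding blk_def by auto
    have "x \<le> 2^(P*j) * 2^(P*l)" by (rule order_trans[OF xle h])
    then show "x \<in> {1..(2^L)^P}" unfolding M2 atLeastAtMost_iff using x1 by blast
  qed
  obtain s k where sk: "{x\<in>cube (2^L) P. \<mu> x \<in> {2^(P*j) * (m - 1) + 1 .. 2^(P*j) * m}} = cubic_block P s k"
  proof -
    have cc: "\<forall>l'\<in>{0..L}. \<forall>n'\<in>{1..2^(P*(L-l'))}. \<exists>s k.
        {x\<in>cube (2^L) P. \<mu> x \<in> {2^(P*l') * (n' - 1) + 1 .. 2^(P*l') * n'}} = cubic_block P s k"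
      using comp unfolding compatible_def by blast
    have jr: "j \<in> {0..L}" by (simp add: j_def)
    have "L - j = l" using lL by (simp add: j_def)
    then have mr: "m \<in> {1..2^(P*(L-j))}" using m1 mle by simp
    from cc jr mr show ?thesis using that by blast
  qed
  define Pre where "Pre = {x\<in>cube (2^L) P. \<mu> x \<in> blk P j m}"
  have Pre_ck: "Pre = cubic_block P s k" using sk unfolding Pre_def blk_def .
  have imPre: "\<mu> ` Pre = blk P j m"
  proof
    show "\<mu> ` Pre \<subseteq> blk P j m" unfolding Pre_def by auto
    show "blk P j m \<subseteq> \<mu> ` Pre"
    proof
      fix y assume y: "y \<in> blk P j m"
      then have "y \<in> \<mu> ` cube (2^L) P" using blkM bij by (auto simp: bij_betw_def)
      then show "y \<in> \<mu> ` Pre" using y unfolding Pre_def by auto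
    qed
  qed
  have injP: "inj_on \<mu> Pre" using bij unfolding bij_betw_def Pre_def by (auto intro: inj_on_subset)
  have cardPre: "card Pre = 2^(P*j)" using card_image[OF injP] imPre card_blk[OF m1] by simp
  have cardck: "card (cubic_block P s k) = (\<Prod>p\<in>{1..P}. card {s * (k p - 1) + 1 .. s * k p})"
    unfolding cubic_block_def by (simp add: card_PiE)
  have kp: "\<forall>p\<in>{1..P}. k p \<ge> 1"
  proof (rule ccontr)
    assume "\<not> (\<forall>p\<in>{1..P}. k p \<ge> 1)"
    then obtain p where p: "p \<in> {1..P}" "k p = 0" by auto
    then have z: "card {s * (k p - 1) + 1 .. s * k p} = 0" by simp
    have "card (cubic_block P s k) = 0" unfolding cardck using p z by (intro prod_zero) (simp, blast)
    then show False using Pre_ck cardPre by simp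
  qed
  have "card (cubic_block P s k) = (\<Prod>p\<in>{1..P}. s)"
    unfolding cardck
  proof (rule prod.cong[OF refl])
    fix p assume "p \<in> {1..P}"
    then have "k p \<ge> 1" using kp by blast
    then show "card {s * (k p - 1) + 1 .. s * k p} = s" by (cases "k p") (auto simp: algebra_simps)
  qed
  then have "s^P = (2^j)^P" using Pre_ck cardPre by (simp add: power_mult[symmetric] mult.commute)
  then have ss: "s = s0" unfolding s0_def using P by (simp add: power_eq_imp_eq_base)
  have x0Pre: "x0 \<in> Pre" using x0c mublk unfolding Pre_def by simp
  have nk: "\<forall>p\<in>{1..P}. n p = k p"
  proof
    fix p assume p: "p \<in> {1..P}"
    have "s0 * (n p - 1) + 1 \<in> {s0 * (k p - 1) + 1 .. s0 * k p}"
      using x0Pre p unfolding Pre_ck cubic_block_def ss x0_def by (auto simp: PiE_def Pi_def)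
    then have a: "s0 * (k p - 1) \<le> s0 * (n p - 1)" and b: "s0 * (n p - 1) < s0 * k p"
      unfolding atLeastAtMost_iff by linarith+
    have "k p - 1 \<le> n p - 1" using a s0pos mult_le_cancel1[of s0 "k p - 1" "n p - 1"] by simp
    moreover have "n p - 1 < k p" using b s0pos mult_less_cancel1[of s0 "n p - 1" "k p"] by simp
    ultimately show "n p = k p" using np p kp by force
  qed
  have "canon_K P L l n = cubic_block P s k"
    unfolding cK cubic_block_def ss using nk by (intro PiE_cong) auto
  then have "\<mu> ` canon_K P L l n = blk P j m" using Pre_ck imPre by simp
  then show ?thesis using m1 mle blkM unfolding j_def by auto
qed

lemma part1:
  fixes P L R :: nat and D :: "nat \<Rightarrow> nat" and W :: "(nat \<Rightarrow> nat) \<Rightarrow> real"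
    and \<mu> :: "(nat \<Rightarrow> nat) \<Rightarrow> nat"
  assumes "P > 0" and "L > 0" and "R > 0"
    and gen: "tn_generated P L R D W"
    and comp: "compatible P L \<mu>"
  shows "(\<forall>A \<epsilon>. 0 \<le> \<epsilon> \<and> \<epsilon> \<le> fnorm D ((2^L)^P) A / 4 \<and>
             fnorm D ((2^L)^P) (\<lambda>i. W i - A i) \<le> \<epsilon> \<longrightarrow>
           (\<forall>l\<in>{0..L}. \<forall>n\<in>PiE {1..P} (\<lambda>_. {1..2^l}).
              QE D ((2^L)^P) A (\<mu> ` canon_K P L l n)
                \<le> ln (real R)
                  + 2 * \<epsilon> / fnorm D ((2^L)^P) A * ln (real (DJ D ((2^L)^P) (\<mu> ` canon_K P L l n)))
                  + 2 * sqrt (2 * \<epsilon> / fnorm D ((2^L)^P) A)))"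
proof (intro allI impI ballI)
  fix A \<epsilon> l n
  assume e: "0 \<le> \<epsilon> \<and> \<epsilon> \<le> fnorm D ((2^L)^P) A / 4 \<and> fnorm D ((2^L)^P) (\<lambda>i. W i - A i) \<le> \<epsilon>"
    and l: "l \<in> {0..L}" and n: "(n :: nat \<Rightarrow> nat) \<in> PiE {1..P} (\<lambda>_. {1..2^l})"
  obtain m where m: "m \<in> {1..2^(P*l)}" and Jb: "\<mu> ` canon_K P L l n = blk P (L - l) m"
    and JM: "blk P (L - l) m \<subseteq> {1..(2^L)^P}"
    using canon_blk[OF assms(1) comp l n] by blast
  define J where "J = \<mu> ` canon_K P L l n"
  have JM': "J \<subseteq> {1..(2^L)^P}" using Jb JM by (simp add: J_def)
  have fact: "\<exists>f g. \<forall>r\<in>tidx D J. \<forall>c\<in>tidx D ({1..(2^L)^P} - J). matricize W J r c = (\<Sum>i<R. f i r * g i c)"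
  proof (cases "l = 0")
    case True
    then have "J = {1..(2^L)^P}" using Jb m unfolding J_def
      by (simp add: blk_def power_mult[symmetric] mult.commute)
    then show ?thesis using W_fact_root[OF assms(3), of D "(2^L)^P" W] by simp
  next
    case False
    then have "L - l < L" using l assms(2) by simp
    then show ?thesis using W_fact_tree[OF _ _ _ JM' gen, of "L - l" m] m Jb unfolding J_def by auto
  qed
  then obtain f g where fg: "\<forall>r\<in>tidx D J. \<forall>c\<in>tidx D ({1..(2^L)^P} - J). matricize W J r c = (\<Sum>i<R. f i r * g i c)"
    by blast
  show "QE D ((2^L)^P) A (\<mu> ` canon_K P L l n)
                \<le> ln (real R)
                  + 2 * \<epsilon> / fnorm D ((2^L)^P) A * ln (real (DJ D ((2^L)^P) (\<mu> ` canon_K P L l n)))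
                  + 2 * sqrt (2 * \<epsilon> / fnorm D ((2^L)^P) A)"
    using part1_J[OF JM' assms(3) fg] e unfolding J_def by blast
qed

lemma schur:
  fixes X :: "'r \<Rightarrow> 'c \<Rightarrow> real"
  assumes fin: "finite Rw" "finite Cl" and X0: "\<forall>r\<in>Rw. \<forall>c\<in>Cl. X r c \<ge> 0"
    and rs: "\<forall>r\<in>Rw. (\<Sum>c\<in>Cl. X r c) \<le> \<beta>" and cs: "\<forall>c\<in>Cl. (\<Sum>r\<in>Rw. X r c) \<le> 1"
    and \<beta>: "\<beta> > 0" and u: "(\<Sum>r\<in>Rw. (u r)\<^sup>2) = 1" and v: "(\<Sum>c\<in>Cl. (v c)\<^sup>2) = 1"
  shows "(\<Sum>r\<in>Rw. \<Sum>c\<in>Cl. u r * X r c * v c)\<^sup>2 \<le> \<beta>"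
proof -
  define t where "t = 1 / sqrt \<beta>"
  have t: "t > 0" using \<beta> by (simp add: t_def)
  have amgm: "2 * \<bar>a * b\<bar> \<le> t * a\<^sup>2 + b\<^sup>2 / t" for a b :: real
  proof -
    have "0 \<le> (t * \<bar>a\<bar> - \<bar>b\<bar>)\<^sup>2" by simp
    then have "2 * t * \<bar>a * b\<bar> \<le> t * t * a\<^sup>2 + b\<^sup>2"
      by (simp add: power2_eq_square algebra_simps abs_mult)
    then have "2 * \<bar>a * b\<bar> \<le> (t * t * a\<^sup>2 + b\<^sup>2) / t" using t by (simp add: le_divide_eq algebra_simps)
    also have "\<dots> = t * a\<^sup>2 + b\<^sup>2 / t" using t by (simp add: field_simps power2_eq_square)
    finally show ?thesis .
  qed
  have "2 * \<bar>\<Sum>r\<in>Rw. \<Sum>c\<in>Cl. u r * X r c * v c\<bar> \<le> 2 * (\<Sum>r\<in>Rw. \<Sum>c\<in>Cl. X r c * \<bar>u r * v c\<bar>)"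
  proof -
    have "\<bar>\<Sum>r\<in>Rw. \<Sum>c\<in>Cl. u r * X r c * v c\<bar> \<le> (\<Sum>r\<in>Rw. \<Sum>c\<in>Cl. \<bar>u r * X r c * v c\<bar>)"
      by (rule order_trans[OF sum_abs sum_mono[OF sum_abs]])
    also have "\<dots> = (\<Sum>r\<in>Rw. \<Sum>c\<in>Cl. X r c * \<bar>u r * v c\<bar>)"
      using X0 by (intro sum.cong refl) (auto simp: abs_mult)
    finally show ?thesis by simp
  qed
  also have "\<dots> = (\<Sum>r\<in>Rw. \<Sum>c\<in>Cl. X r c * (2 * \<bar>u r * v c\<bar>))"
    by (simp add: sum_distrib_left algebra_simps)
  also have "\<dots> \<le> (\<Sum>r\<in>Rw. \<Sum>c\<in>Cl. X r c * (t * (u r)\<^sup>2 + (v c)\<^sup>2 / t))"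
    using X0 amgm by (intro sum_mono mult_left_mono) auto
  also have "\<dots> = t * (\<Sum>r\<in>Rw. (u r)\<^sup>2 * (\<Sum>c\<in>Cl. X r c)) + (\<Sum>c\<in>Cl. (v c)\<^sup>2 * (\<Sum>r\<in>Rw. X r c)) / t"
  proof -
    have e1: "(\<Sum>r\<in>Rw. \<Sum>c\<in>Cl. X r c * (t * (u r)\<^sup>2 + (v c)\<^sup>2 / t))
        = (\<Sum>r\<in>Rw. \<Sum>c\<in>Cl. X r c * (t * (u r)\<^sup>2)) + (\<Sum>r\<in>Rw. \<Sum>c\<in>Cl. X r c * ((v c)\<^sup>2 / t))"
      by (simp add: distrib_left sum.distrib)
    have e2: "(\<Sum>r\<in>Rw. \<Sum>c\<in>Cl. X r c * (t * (u r)\<^sup>2)) = t * (\<Sum>r\<in>Rw. (u r)\<^sup>2 * (\<Sum>c\<in>Cl. X r c))"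
      by (simp add: sum_distrib_left sum_distrib_right algebra_simps)
    have e3: "(\<Sum>r\<in>Rw. \<Sum>c\<in>Cl. X r c * ((v c)\<^sup>2 / t)) = (\<Sum>c\<in>Cl. \<Sum>r\<in>Rw. X r c * ((v c)\<^sup>2 / t))"
      by (rule sum.swap)
    have e4: "(\<Sum>c\<in>Cl. \<Sum>r\<in>Rw. X r c * ((v c)\<^sup>2 / t)) = (\<Sum>c\<in>Cl. (v c)\<^sup>2 * (\<Sum>r\<in>Rw. X r c)) / t"
      by (simp add: sum_distrib_left sum_distrib_right sum_divide_distrib algebra_simps)
    show ?thesis using e1 e2 e3 e4 by simp
  qed
  also have "\<dots> \<le> t * (\<Sum>r\<in>Rw. (u r)\<^sup>2 * \<beta>) + (\<Sum>c\<in>Cl. (v c)\<^sup>2 * 1) / t"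
  proof -
    have "(\<Sum>r\<in>Rw. (u r)\<^sup>2 * (\<Sum>c\<in>Cl. X r c)) \<le> (\<Sum>r\<in>Rw. (u r)\<^sup>2 * \<beta>)"
      using rs by (intro sum_mono mult_left_mono) auto
    moreover have "(\<Sum>c\<in>Cl. (v c)\<^sup>2 * (\<Sum>r\<in>Rw. X r c)) \<le> (\<Sum>c\<in>Cl. (v c)\<^sup>2 * 1)"
      using cs by (intro sum_mono mult_left_mono) auto
    ultimately show ?thesis using t by (intro add_mono mult_left_mono divide_right_mono) auto
  qed
  also have "\<dots> = t * \<beta> + 1 / t" using u v by (simp add: sum_distrib_right[symmetric])
  also have "\<dots> = 2 * sqrt \<beta>" using \<beta> by (simp add: t_def real_div_sqrt)
  finally have "\<bar>\<Sum>r\<in>Rw. \<Sum>c\<in>Cl. u r * X r c * v c\<bar> \<le> sqrt \<beta>" by simp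
  then have "\<bar>\<Sum>r\<in>Rw. \<Sum>c\<in>Cl. u r * X r c * v c\<bar>\<^sup>2 \<le> (sqrt \<beta>)\<^sup>2"
    by (intro power_mono) auto
  then show ?thesis using \<beta> by simp
qed

lemma svd_sigma:
  assumes svd: "is_svd Rw Cl X k \<sigma> u v" and d: "d < k"
  shows "(\<Sum>r\<in>Rw. \<Sum>c\<in>Cl. u d r * X r c * v d c) = \<sigma> d"
proof -
  have ou: "orthon Rw k u" and ov: "orthon Cl k v" and X: "\<forall>r\<in>Rw. \<forall>c\<in>Cl. X r c = (\<Sum>e<k. \<sigma> e * u e r * v e c)"
    using svd unfolding is_svd_def orthon_def by blast+
  have inner: "(\<Sum>c\<in>Cl. X r c * v d c) = \<sigma> d * u d r" if r: "r \<in> Rw" for r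
  proof -
    have "(\<Sum>c\<in>Cl. X r c * v d c) = (\<Sum>c\<in>Cl. v d c * (\<Sum>e<k. (\<sigma> e * u e r) * v e c))"
      using X r by (intro sum.cong) (auto simp: algebra_simps)
    also have "\<dots> = (\<Sum>e<k. (\<sigma> e * u e r) * (\<Sum>c\<in>Cl. v d c * v e c))"
      by (rule orthon_inner_combo[OF ov])
    also have "\<dots> = (\<Sum>e<k. (\<sigma> e * u e r) * (if d = e then 1 else 0))"
      using ov d unfolding orthon_def by (intro sum.cong) auto
    also have "\<dots> = \<sigma> d * u d r" using d by (simp add: if_distrib cong: if_cong)
    finally show ?thesis .
  qed
  have "(\<Sum>r\<in>Rw. \<Sum>c\<in>Cl. u d r * X r c * v d c) = (\<Sum>r\<in>Rw. u d r * (\<Sum>c\<in>Cl. X r c * v d c))"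
    by (simp add: sum_distrib_left algebra_simps)
  also have "\<dots> = (\<Sum>r\<in>Rw. \<sigma> d * (u d r * u d r))" using inner by (intro sum.cong) auto
  also have "\<dots> = \<sigma> d" using ou d unfolding orthon_def by (simp add: sum_distrib_left[symmetric])
  finally show ?thesis .
qed

lemma entropy_lower:
  fixes \<sigma> :: "nat \<Rightarrow> real"
  assumes T: "(\<Sum>d<k. (\<sigma> d)\<^sup>2) > 0" and b: "\<forall>d<k. (\<sigma> d)\<^sup>2 \<le> \<beta>" and \<beta>: "\<beta> > 0"
  shows "ln ((\<Sum>d<k. (\<sigma> d)\<^sup>2) / \<beta>) \<le> sv_entropy k \<sigma>"
proof -
  define T where "T = (\<Sum>d<k. (\<sigma> d)\<^sup>2)"
  have Tp: "T > 0" using T by (simp add: T_def)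
  have tm: "(\<sigma> d)\<^sup>2 / T * ln (T / \<beta>) \<le> - (let \<rho> = (\<sigma> d)\<^sup>2 / T in if \<rho> = 0 then 0 else \<rho> * ln \<rho>)"
    if d: "d < k" for d
  proof (cases "\<sigma> d = 0")
    case True then show ?thesis by simp
  next
    case False
    define \<rho> where "\<rho> = (\<sigma> d)\<^sup>2 / T"
    have \<rho>p: "\<rho> > 0" using False Tp by (simp add: \<rho>_def)
    have "\<rho> \<le> \<beta> / T" using b d Tp by (simp add: \<rho>_def divide_right_mono)
    then have "ln \<rho> \<le> ln (\<beta> / T)" using \<rho>p by simp
    also have "ln (\<beta> / T) = - ln (T / \<beta>)" using \<beta> Tp by (simp add: ln_div)
    finally have "\<rho> * ln (T / \<beta>) \<le> \<rho> * (- ln \<rho>)" using \<rho>p by (intro mult_left_mono) auto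
    then show ?thesis using \<rho>p by (simp add: \<rho>_def[symmetric] Let_def)
  qed
  have "ln (T / \<beta>) = (\<Sum>d<k. (\<sigma> d)\<^sup>2 / T * ln (T / \<beta>))"
    using Tp by (simp add: sum_distrib_right[symmetric] sum_divide_distrib[symmetric] T_def)
  also have "\<dots> \<le> (\<Sum>d<k. - (let \<rho> = (\<sigma> d)\<^sup>2 / T in if \<rho> = 0 then 0 else \<rho> * ln \<rho>))"
    by (intro sum_mono tm) auto
  also have "\<dots> = sv_entropy k \<sigma>" unfolding sv_entropy_def T_def by (simp add: sum_negf)
  finally show ?thesis by (simp add: T_def)
qed

lemma sum_ind_card: "finite A \<Longrightarrow> (\<Sum>x\<in>A. if P x then (1::real) else 0) = real (card {x\<in>A. P x})"
proof -
  assume "finite A"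
  have "(\<Sum>x\<in>A. if P x then (1::real) else 0) = (\<Sum>x\<in>{x\<in>A. P x}. 1)"
    using \<open>finite A\<close> by (simp add: sum.If_cases Int_def conj_commute)
  then show ?thesis by simp
qed

lemma part2_J:
  fixes M d :: nat and \<pi> :: "nat \<Rightarrow> nat" and A' :: "(nat \<Rightarrow> nat) \<Rightarrow> real"
  assumes JM: "J \<subseteq> {1..M}"
    and \<pi>M: "\<forall>x\<in>{1..M}. \<pi> x \<in> {1..M}" and \<pi>inv: "\<forall>x\<in>{1..M}. \<pi> (\<pi> x) = x"
    and \<pi>J: "\<forall>x\<in>J. \<pi> x \<notin> J"
    and d1: "d \<ge> 1" and dD: "\<forall>x\<in>{1..M}. d \<le> D x"
    and A'def: "A' = (\<lambda>i. if \<forall>x\<in>{1..M}. i x < d \<and> i x = i (\<pi> x) then 1 else 0)"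
    and svd: "is_svd (tidx D J) (tidx D ({1..M} - J)) (matricize A' J) k \<sigma> u v"
  shows "real (card J) * ln (real d) \<le> sv_entropy k \<sigma>"
proof -
  define Rw where "Rw = tidx D J"
  define Cl where "Cl = tidx D ({1..M} - J)"
  define good where "good r c \<longleftrightarrow> (\<forall>x\<in>{1..M}. mrg J r c x < d \<and> mrg J r c x = mrg J r c (\<pi> x))" for r c
  define X where "X = matricize A' J"
  have Xg: "X r c = (if good r c then 1 else 0)" for r c
    unfolding X_def matricize_mrg A'def good_def by simp
  define S where "S r = {c\<in>Cl. good r c}" for r
  define V where "V = tidx (\<lambda>_. d) J"
  have finJ: "finite J" using JM finite_subset by blast
  have fR: "finite Rw" unfolding Rw_def using finJ by (rule finite_tidx)
  have fC: "finite Cl" unfolding Cl_def by (rule finite_tidx) simp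
  have VR: "V \<subseteq> Rw" unfolding V_def Rw_def tidx_def using dD JM by force
  have piJ: "\<pi> ` J \<subseteq> {1..M} - J" using \<pi>M \<pi>J JM by auto
  have goodV: "r \<in> V" if "r \<in> Rw" "good r c" for r c
  proof -
    have "r x < d" if x: "x \<in> J" for x
    proof -
      have "x \<in> {1..M}" using x JM by blast
      then have "mrg J r c x < d" using \<open>good r c\<close> unfolding good_def by blast
      then show ?thesis using x by (simp add: mrg_def)
    qed
    then show ?thesis using \<open>r \<in> Rw\<close> unfolding V_def Rw_def tidx_def by auto
  qed
  have rowdet: "r x = c (\<pi> x)" if "r \<in> Rw" "good r c" "x \<in> J" for r c x
  proof -
    have "x \<in> {1..M}" using that JM by auto
    then have "mrg J r c x = mrg J r c (\<pi> x)" using \<open>good r c\<close> unfolding good_def by blast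
    then show ?thesis using that \<pi>J unfolding mrg_def by auto
  qed
  have coluniq: "r = r'" if "r \<in> Rw" "r' \<in> Rw" "good r c" "good r' c" for r r' c
  proof
    fix x show "r x = r' x"
    proof (cases "x \<in> J")
      case True then show ?thesis using rowdet that by metis
    next
      case False then show ?thesis using that unfolding Rw_def tidx_def by auto
    qed
  qed
  define \<tau> :: "(nat \<Rightarrow> nat) \<Rightarrow> (nat \<Rightarrow> nat) \<Rightarrow> nat \<Rightarrow> nat" where "\<tau> r' c = (\<lambda>x. if x \<in> \<pi> ` J then r' (\<pi> x) else c x)" for r' c
  have tau_in: "\<tau> r' c \<in> S r'" if r: "r \<in> V" and r': "r' \<in> V" and c: "c \<in> S r" for r r' c
  proof -
    have cC: "c \<in> Cl" and gc: "good r c" using c unfolding S_def by auto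
    have rR: "r \<in> Rw" using r VR by blast
    have r'd: "\<forall>x\<in>J. r' x < d" using r' unfolding V_def tidx_def by auto
    have r'0: "\<forall>x. x \<notin> J \<longrightarrow> r' x = 0" using r' unfolding V_def tidx_def by auto
    have "\<tau> r' c \<in> Cl"
    proof -
      have "\<tau> r' c n < D n" if n: "n \<in> {1..M} - J" for n
      proof (cases "n \<in> \<pi> ` J")
        case True
        then obtain y where y: "y \<in> J" "n = \<pi> y" by blast
        then have "\<pi> n = y" using \<pi>inv JM by auto
        then have "\<tau> r' c n = r' y" using True by (simp add: \<tau>_def)
        then show ?thesis using r'd y dD n by fastforce
      next
        case False then show ?thesis using cC n unfolding \<tau>_def Cl_def tidx_def by auto
      qed
      moreover have "\<tau> r' c n = 0" if n: "n \<notin> {1..M} - J" for n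
      proof -
        have "n \<notin> \<pi> ` J" using n piJ by blast
        then show ?thesis using cC n unfolding \<tau>_def Cl_def tidx_def by auto
      qed
      ultimately show ?thesis unfolding Cl_def tidx_def by blast
    qed
    moreover have "good r' (\<tau> r' c)"
      unfolding good_def
    proof
      fix x assume x: "x \<in> {1..M}"
      let ?i = "mrg J r c" and ?i' = "mrg J r' (\<tau> r' c)"
      have gx: "?i x < d \<and> ?i x = ?i (\<pi> x)" using gc x unfolding good_def by blast
      show "?i' x < d \<and> ?i' x = ?i' (\<pi> x)"
      proof (cases "x \<in> J")
        case True
        have "\<pi> x \<notin> J" using \<pi>J True by blast
        moreover have "\<pi> x \<in> \<pi> ` J" using True by blast
        moreover have "\<pi> (\<pi> x) = x" using \<pi>inv x by blast
        ultimately show ?thesis using True r'd by (simp add: mrg_def \<tau>_def)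
      next
        case nJ: False
        show ?thesis
        proof (cases "x \<in> \<pi> ` J")
          case True
          then obtain y where y: "y \<in> J" "x = \<pi> y" by blast
          then have "\<pi> x = y" using \<pi>inv JM by auto
          then show ?thesis using nJ True y r'd by (simp add: mrg_def \<tau>_def)
        next
          case False
          have p1: "\<pi> x \<notin> J"
          proof
            assume "\<pi> x \<in> J"
            then have "\<pi> (\<pi> x) \<in> \<pi> ` J" by blast
            then show False using \<pi>inv x False by simp
          qed
          have p2: "\<pi> x \<notin> \<pi> ` J"
          proof
            assume "\<pi> x \<in> \<pi> ` J"
            then obtain y where y: "y \<in> J" "\<pi> x = \<pi> y" by blast
            then have "x = y" using \<pi>inv x JM by (metis subsetD)
            then show False using nJ y by simp
          qed
          have "?i' x = ?i x" using nJ False by (simp add: mrg_def \<tau>_def)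
          moreover have "?i' (\<pi> x) = ?i (\<pi> x)" using p1 p2 by (simp add: mrg_def \<tau>_def)
          ultimately show ?thesis using gx by simp
        qed
      qed
    qed
    ultimately show ?thesis unfolding S_def by blast
  qed
  have tau_inv: "\<tau> r (\<tau> r' c) = c" if r: "r \<in> V" and c: "c \<in> S r" for r r' c
  proof
    fix x
    have rR: "r \<in> Rw" using r VR by blast
    have gc: "good r c" using c unfolding S_def by auto
    show "\<tau> r (\<tau> r' c) x = c x"
    proof (cases "x \<in> \<pi> ` J")
      case True
      then obtain y where y: "y \<in> J" "x = \<pi> y" by blast
      then have "\<pi> x = y" using \<pi>inv JM by auto
      then have "r (\<pi> x) = c x" using rowdet[OF rR gc y(1)] y by simp
      then show ?thesis using True by (simp add: \<tau>_def)
    next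
      case False then show ?thesis by (simp add: \<tau>_def)
    qed
  qed
  have cardS: "card (S r) = card (S r')" if "r \<in> V" "r' \<in> V" for r r'
  proof -
    have "bij_betw (\<tau> r') (S r) (S r')"
      by (rule bij_betw_byWitness[where f'="\<tau> r"]) (use tau_in tau_inv that in auto)
    then show ?thesis by (rule bij_betw_same_card)
  qed
  define z :: "nat \<Rightarrow> nat" where "z = (\<lambda>_. 0)"
  have zV: "z \<in> V" using d1 unfolding V_def tidx_def z_def by auto
  have zC: "z \<in> Cl" unfolding Cl_def tidx_def z_def using dD d1 by auto
  have zz: "z \<in> S z" using zC d1 unfolding S_def good_def z_def mrg_def by auto
  define \<beta> where "\<beta> = card (S z)"
  have finS: "finite (S r)" for r using fC unfolding S_def by auto
  have \<beta>1: "\<beta> \<ge> 1" unfolding \<beta>_def using zz finS[of z] by (metis One_nat_def Suc_leI card_gt_0_iff empty_iff)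
  have rowsum: "(\<Sum>c\<in>Cl. X r c) = (if r \<in> V then real \<beta> else 0)" if r: "r \<in> Rw" for r
  proof -
    have "(\<Sum>c\<in>Cl. X r c) = real (card (S r))" unfolding Xg S_def by (rule sum_ind_card[OF fC])
    moreover have "r \<notin> V \<Longrightarrow> S r = {}" using goodV r unfolding S_def by blast
    ultimately show ?thesis using cardS[OF _ zV] unfolding \<beta>_def by auto
  qed
  have colsum: "(\<Sum>r\<in>Rw. X r c) \<le> 1" if c: "c \<in> Cl" for c
  proof -
    have "(\<Sum>r\<in>Rw. X r c) = real (card {r\<in>Rw. good r c})" unfolding Xg by (rule sum_ind_card[OF fR])
    moreover have "card {r\<in>Rw. good r c} \<le> Suc 0"
      using fR coluniq by (subst card_le_Suc0_iff_eq) auto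
    ultimately show ?thesis by simp
  qed
  have X2: "(X r c)\<^sup>2 = X r c" for r c unfolding Xg by simp
  have T: "(\<Sum>d<k. (\<sigma> d)\<^sup>2) = real (card V) * real \<beta>"
  proof -
    have "(\<Sum>d<k. (\<sigma> d)\<^sup>2) = (\<Sum>r\<in>Rw. \<Sum>c\<in>Cl. (X r c)\<^sup>2)"
      using svd_frob[OF svd[folded Rw_def Cl_def X_def] fR fC] by simp
    also have "\<dots> = (\<Sum>r\<in>Rw. if r \<in> V then real \<beta> else 0)" unfolding X2 using rowsum by simp
    also have "\<dots> = real (card V) * real \<beta>"
      using fR VR by (simp add: sum.If_cases Int_absorb1 Int_commute)
    finally show ?thesis .
  qed
  have sig: "(\<sigma> dd)\<^sup>2 \<le> real \<beta>" if dd: "dd < k" for dd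
  proof -
    have ou: "orthon Rw k u" and ov: "orthon Cl k v"
      using svd unfolding is_svd_def orthon_def Rw_def Cl_def by blast+
    have "(\<Sum>r\<in>Rw. \<Sum>c\<in>Cl. u dd r * X r c * v dd c)\<^sup>2 \<le> real \<beta>"
    proof (rule schur[OF fR fC])
      show "\<forall>r\<in>Rw. \<forall>c\<in>Cl. 0 \<le> X r c" by (simp add: Xg)
      show "\<forall>r\<in>Rw. (\<Sum>c\<in>Cl. X r c) \<le> real \<beta>" using rowsum by simp
      show "\<forall>c\<in>Cl. (\<Sum>r\<in>Rw. X r c) \<le> 1" using colsum by blast
      show "0 < real \<beta>" using \<beta>1 by simp
      show "(\<Sum>r\<in>Rw. (u dd r)\<^sup>2) = 1" using ou dd unfolding orthon_def by (simp add: power2_eq_square)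
      show "(\<Sum>c\<in>Cl. (v dd c)\<^sup>2) = 1" using ov dd unfolding orthon_def by (simp add: power2_eq_square)
    qed
    then show ?thesis using svd_sigma[OF svd[folded Rw_def Cl_def X_def] dd] by simp
  qed
  have cV: "card V = d ^ card J" unfolding V_def using card_tidx[OF finJ] by simp
  have Tpos: "(\<Sum>d<k. (\<sigma> d)\<^sup>2) > 0" unfolding T cV using d1 \<beta>1 by simp
  have "ln ((\<Sum>d<k. (\<sigma> d)\<^sup>2) / real \<beta>) \<le> sv_entropy k \<sigma>"
    by (rule entropy_lower[OF Tpos]) (use sig \<beta>1 in auto)
  moreover have "ln ((\<Sum>d<k. (\<sigma> d)\<^sup>2) / real \<beta>) = real (card J) * ln (real d)"
    unfolding T cV using \<beta>1 d1 by (simp add: ln_realpow)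
  ultimately show ?thesis by simp
qed

definition piax :: "nat \<Rightarrow> nat \<Rightarrow> nat \<Rightarrow> nat" where
  "piax P L x = (if even ((x - 1) div 2^(P*(L-1))) then x + 2^(P*(L-1)) else x - 2^(P*(L-1)))"

lemma piax_props:
  assumes P: "P > 0" and L: "L > 0" and x: "x \<in> {1..(2^L)^P}"
  shows "piax P L x \<in> {1..(2^L)^P} \<and> piax P L (piax P L x) = x \<and>
         (piax P L x - 1) div 2^(P*(L-1)) \<noteq> (x - 1) div 2^(P*(L-1))"
proof -
  define B :: nat where "B = 2^(P*(L-1))"
  have Bp: "B > 0" by (simp add: B_def)
  have e: "P * (L - 1) + P = L * P" using L by (cases L) (auto simp: algebra_simps)
  have M: "((2::nat)^L)^P = B * 2^P"
  proof -
    have "B * 2^P = 2^(P*(L-1) + P)" by (simp add: B_def power_add)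
    also have "\<dots> = 2^(L*P)" by (simp only: e)
    also have "\<dots> = (2^L)^P" by (simp add: power_mult)
    finally show ?thesis by simp
  qed
  define q where "q = (x - 1) div B"
  have x1: "x \<ge> 1" and xM: "x \<le> B * 2^P" using x M by auto
  have qlt: "q < 2^P"
  proof -
    have "x - 1 < B * 2^P" using x1 xM by linarith
    then show ?thesis unfolding q_def by (simp add: div_less_iff_less_mult mult.commute Bp)
  qed
  have pi_def': "piax P L y = (if even ((y - 1) div B) then y + B else y - B)" for y
    by (simp add: piax_def B_def)
  show ?thesis
  proof (cases "even q")
    case True
    have px: "piax P L x = x + B" using True by (simp add: pi_def' q_def)
    have q1: "(x + B - 1) div B = q + 1"
    proof -
      have a: "(x - 1 + B) div B = q + 1" using Bp by (simp add: q_def)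
      have b: "x + B - 1 = x - 1 + B" using x1 by simp
      show ?thesis by (subst b) (rule a)
    qed
    have "q + 1 < 2^P"
    proof (rule ccontr)
      assume "\<not> q + 1 < 2^P"
      then have "q + 1 = 2^P" using qlt by simp
      moreover have "even ((2::nat)^P)" using P by simp
      ultimately have "even (q + 1)" by metis
      then show False using True by simp
    qed
    then have "q + 2 \<le> 2^P" by simp
    have "x - 1 < B * (q + 1)"
    proof -
      have "x - 1 = B * q + (x - 1) mod B" by (simp add: q_def)
      moreover have "(x - 1) mod B < B" using Bp by simp
      ultimately show ?thesis by simp
    qed
    then have "x + B \<le> B * (q + 2)" using x1 by (simp add: algebra_simps)
    also have "\<dots> \<le> B * 2^P" using \<open>q + 2 \<le> 2^P\<close> by (rule mult_le_mono2)
    finally have in1: "x + B \<in> {1..(2^L)^P}" using M x1 by simp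
    have "odd (q + 1)" using True by simp
    then have "piax P L (x + B) = x" using q1 by (simp add: pi_def')
    then have c2: "piax P L (piax P L x) = x" using px by simp
    have c1: "piax P L x \<in> {1..(2^L)^P}" using px in1 by simp
    have c3: "(piax P L x - 1) div B \<noteq> (x - 1) div B" using px q1 by (simp add: q_def)
    show ?thesis using c1 c2 c3 unfolding B_def by blast
  next
    case False
    have px: "piax P L x = x - B" using False by (simp add: pi_def' q_def)
    have q1: "q \<ge> 1" using False by (cases q) auto
    have xB: "x - 1 \<ge> B"
    proof -
      have h1: "B * 1 \<le> B * q" using q1 by (rule mult_le_mono2)
      have h2: "B * q \<le> x - 1" unfolding q_def by simp
      from order_trans[OF h1 h2] show ?thesis by simp
    qed
    have q2: "(x - B - 1) div B = q - 1"
    proof -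
      have b: "x - 1 = (x - B - 1) + B" using xB by simp
      have a: "(x - B - 1 + B) div B = (x - B - 1) div B + 1" using Bp by simp
      have "q = (x - B - 1) div B + 1" unfolding q_def by (subst b) (rule a)
      then show ?thesis by simp
    qed
    have in1: "x - B \<in> {1..(2^L)^P}" using xB x by auto
    have "even (q - 1)" using False q1 by simp
    then have "piax P L (x - B) = x - B + B" using q2 by (simp add: pi_def')
    then have "piax P L (x - B) = x" using xB by simp
    then have c2: "piax P L (piax P L x) = x" using px by simp
    have c1: "piax P L x \<in> {1..(2^L)^P}" using px in1 by simp
    have c3: "(piax P L x - 1) div B \<noteq> (x - 1) div B" using px q2 q1 by (simp add: q_def)
    show ?thesis using c1 c2 c3 unfolding B_def by blast
  qed
qed

lemma piax_J:
  assumes P: "P > 0" and L: "L > 0" and j: "j < L" and m: "m \<ge> 1"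
    and JM: "blk P j m \<subseteq> {1..(2^L)^P}"
  shows "\<forall>x\<in>blk P j m. piax P L x \<notin> blk P j m"
proof (intro ballI notI)
  fix x assume x: "x \<in> blk P j m" and px: "piax P L x \<in> blk P j m"
  have "(piax P L x - 1) div 2^(P*(L-1)) = (x - 1) div 2^(P*(L-1))"
  proof -
    have "j \<le> L - 1" using j by simp
    from same_block[OF this m px x] show ?thesis .
  qed
  then show False using piax_props[OF P L] x JM by blast
qed

lemma card_canon:
  assumes n: "n \<in> PiE {1..P} (\<lambda>_. {1..2^l})"
  shows "card (canon_K P L l n) = 2^(P*(L-l))"
proof -
  have "card (canon_K P L l n) = (\<Prod>p\<in>{1..P}. card {2^(L-l) * (n p - 1) + 1 .. 2^(L-l) * n p})"
    unfolding canon_K_def by (simp add: card_PiE)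
  also have "\<dots> = (\<Prod>p\<in>{1..P}. 2^(L-l))"
  proof (rule prod.cong[OF refl])
    fix p assume "p \<in> {1..P}"
    then have "n p \<ge> 1" using n by (auto simp: PiE_def Pi_def)
    then show "card {2^(L-l) * (n p - 1) + 1 .. 2^(L-l) * n p} = 2^(L-l)"
      by (cases "n p") (auto simp: algebra_simps)
  qed
  also have "\<dots> = 2^(P*(L-l))" by (simp add: power_mult[symmetric] mult.commute)
  finally show ?thesis .
qed

lemma part2:
  fixes P L :: nat and D :: "nat \<Rightarrow> nat" and \<mu> :: "(nat \<Rightarrow> nat) \<Rightarrow> nat"
  assumes P: "P > 0" and L: "L > 0" and Dp: "\<forall>n\<in>{1..(2^L)^P}. D n > 0"
    and comp: "compatible P L \<mu>"
  shows "\<exists>A'. \<forall>l\<in>{0..L}. \<forall>n\<in>PiE {1..P} (\<lambda>_. {1..2^l}).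
              QE D ((2^L)^P) A' (\<mu> ` canon_K P L l n)
                \<ge> real (min (card (canon_K P L l n)) (card (cube (2^L) P - canon_K P L l n)))
                  * ln (real (Min (D ` {1..(2^L)^P})))"
proof -
  define M :: nat where "M = (2^L)^P"
  define d where "d = Min (D ` {1..M})"
  define A' :: "(nat \<Rightarrow> nat) \<Rightarrow> real" where
    "A' = (\<lambda>i. if \<forall>x\<in>{1..M}. i x < d \<and> i x = i (piax P L x) then 1 else 0)"
  have M1: "M \<ge> 1" by (simp add: M_def)
  have dD: "\<forall>x\<in>{1..M}. d \<le> D x" unfolding d_def by simp
  have d1: "d \<ge> 1"
  proof -
    have "d \<in> D ` {1..M}" unfolding d_def using M1 by (intro Min_in) auto
    then show ?thesis using Dp unfolding M_def by auto
  qed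
  have lnd: "0 \<le> ln (real d)" using d1 by simp
  have "\<forall>l\<in>{0..L}. \<forall>n\<in>PiE {1..P} (\<lambda>_. {1..2^l}).
              QE D M A' (\<mu> ` canon_K P L l n)
                \<ge> real (min (card (canon_K P L l n)) (card (cube (2^L) P - canon_K P L l n))) * ln (real d)"
  proof (intro ballI)
    fix l and n :: "nat \<Rightarrow> nat" assume l: "l \<in> {0..L}" and n: "n \<in> PiE {1..P} (\<lambda>_. {1..2^l})"
    obtain m where m: "m \<in> {1..2^(P*l)}" and Jb: "\<mu> ` canon_K P L l n = blk P (L - l) m"
      and JM: "blk P (L - l) m \<subseteq> {1..M}"
      using canon_blk[OF P comp l n] unfolding M_def by blast
    define J where "J = \<mu> ` canon_K P L l n"
    have finJ: "finite J" using JM Jb unfolding J_def by (metis finite_atLeastAtMost finite_subset)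
    show "QE D M A' (\<mu> ` canon_K P L l n)
                \<ge> real (min (card (canon_K P L l n)) (card (cube (2^L) P - canon_K P L l n))) * ln (real d)"
    proof (cases "l = 0")
      case True
      have "canon_K P L l n = cube (2^L) P"
        unfolding canon_K_def cube_def using True n by (intro PiE_cong) (auto simp: PiE_def Pi_def)
      then have r0: "real (min (card (canon_K P L l n)) (card (cube (2^L) P - canon_K P L l n))) * ln (real d) = 0"
        by simp
      have "0 \<le> QE D M A' J"
        by (rule QE_prop) (use finJ in \<open>auto intro: finite_tidx sv_entropy_nonneg\<close>)
      then show ?thesis unfolding J_def r0 .
    next
      case False
      have j: "L - l < L" using False l L by simp
      have m1: "m \<ge> 1" using m by simp
      have piJ: "\<forall>x\<in>J. piax P L x \<notin> J"
        using piax_J[OF P L j m1] JM Jb unfolding J_def M_def by simp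
      have pM: "\<forall>x\<in>{1..M}. piax P L x \<in> {1..M}" and pinv: "\<forall>x\<in>{1..M}. piax P L (piax P L x) = x"
        using piax_props[OF P L] unfolding M_def by blast+
      have JM': "J \<subseteq> {1..M}" using JM Jb unfolding J_def by simp
      have "real (card J) * ln (real d) \<le> QE D M A' J"
        by (rule QE_prop) (use finJ in \<open>auto intro: finite_tidx part2_J[OF JM' pM pinv piJ d1 dD A'_def]\<close>)
      moreover have "card (canon_K P L l n) = card J"
        unfolding J_def Jb card_canon[OF n] using card_blk[OF m1] by simp
      moreover have "real (min (card (canon_K P L l n)) (card (cube (2^L) P - canon_K P L l n))) \<le> real (card (canon_K P L l n))"
        by simp
      ultimately show ?thesis unfolding J_def using lnd
        by (smt (verit) mult_right_mono)
    qed
  qed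
  then show ?thesis unfolding M_def d_def by blast
qed

theorem theorem3:
  fixes P L R :: nat and D :: "nat \<Rightarrow> nat" and W :: "(nat \<Rightarrow> nat) \<Rightarrow> real"
    and \<mu> :: "(nat \<Rightarrow> nat) \<Rightarrow> nat"
  assumes "P > 0" and "L > 0" and "\<forall>n\<in>{1..(2^L)^P}. D n > 0" and "R > 0"
    and "tn_generated P L R D W"
    and "compatible P L \<mu>"
  shows "(\<forall>A \<epsilon>. 0 \<le> \<epsilon> \<and> \<epsilon> \<le> fnorm D ((2^L)^P) A / 4 \<and>
             fnorm D ((2^L)^P) (\<lambda>i. W i - A i) \<le> \<epsilon> \<longrightarrow>
           (\<forall>l\<in>{0..L}. \<forall>n\<in>PiE {1..P} (\<lambda>_. {1..2^l}).
              QE D ((2^L)^P) A (\<mu> ` canon_K P L l n)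
                \<le> ln (real R)
                  + 2 * \<epsilon> / fnorm D ((2^L)^P) A * ln (real (DJ D ((2^L)^P) (\<mu> ` canon_K P L l n)))
                  + 2 * sqrt (2 * \<epsilon> / fnorm D ((2^L)^P) A)))
       \<and> (\<exists>A'. \<forall>l\<in>{0..L}. \<forall>n\<in>PiE {1..P} (\<lambda>_. {1..2^l}).
              QE D ((2^L)^P) A' (\<mu> ` canon_K P L l n)
                \<ge> real (min (card (canon_K P L l n)) (card (cube (2^L) P - canon_K P L l n)))
                  * ln (real (Min (D ` {1..(2^L)^P}))))"
proof (rule conjI)
  show "\<forall>A \<epsilon>. 0 \<le> \<epsilon> \<and> \<epsilon> \<le> fnorm D ((2^L)^P) A / 4 \<and>
             fnorm D ((2^L)^P) (\<lambda>i. W i - A i) \<le> \<epsilon> \<longrightarrow>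
           (\<forall>l\<in>{0..L}. \<forall>n\<in>PiE {1..P} (\<lambda>_. {1..2^l}).
              QE D ((2^L)^P) A (\<mu> ` canon_K P L l n)
                \<le> ln (real R)
                  + 2 * \<epsilon> / fnorm D ((2^L)^P) A * ln (real (DJ D ((2^L)^P) (\<mu> ` canon_K P L l n)))
                  + 2 * sqrt (2 * \<epsilon> / fnorm D ((2^L)^P) A))"
    by (rule part1[OF assms(1,2,4,5,6)])
  show "\<exists>A'. \<forall>l\<in>{0..L}. \<forall>n\<in>PiE {1..P} (\<lambda>_. {1..2^l}).
              QE D ((2^L)^P) A' (\<mu> ` canon_K P L l n)
                \<ge> real (min (card (canon_K P L l n)) (card (cube (2^L) P - canon_K P L l n)))
                  * ln (real (Min (D ` {1..(2^L)^P})))"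
    by (rule part2[OF assms(1,2,3,6)])
qed

end
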